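(* Let $\lambda=(\lambda_1,\lambda_2,\lambda_3)\in\mathbb{C}^3$ and $s=(s_1,s_2,s_3)\in\mathbb{R}^3$. There exists $\Delta\in\mathcal{M}_3(\mathbb{R})$ with $\mathrm{spec}(\Delta)=\{\lambda_1,\lambda_2,\lambda_3\}$ (as a multiset) and $O_1\Delta O_2=\mathrm{diag}(s_1,s_2,s_3)$ for some $O_1,O_2\in SO(3)$ if and only if all of the following hold: (1) the multiset $\{\lambda_1,\lambda_2,\lambda_3\}$ is invariant under complex conjugation (i.e. either all $\lambda_i$ are real, or one is real and the other two form a complex conjugate pair); (2) $s_1s_2s_3=\lambda_1\lambda_2\lambda_3$; (3) $|s_1^\downarrow s_2^\downarrow|\ge|\lambda_1^\downarrow\lambda_2^\downarrow|$ and $|s_1^\downarrow|\ge|\lambda_1^\downarrow|$, where $s^\downarrow$ and $\lambda^\downarrow$ denote reorderings with $|s_1^\downarrow|\ge|s_2^\downarrow|\ge|s_3^\downarrow|$ and $|\lambda_1^\downarrow|\ge|\lambda_2^\downarrow|\ge|\lambda_3^\downarrow|$.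
   Context: $SO(3)$ is the group of real $3\times 3$ orthogonal matrices with determinant $1$; $\mathrm{spec}(\Delta)$ is the multiset of eigenvalues of $\Delta$ counted with algebraic multiplicity. *)

theory Defs
  imports "Jordan_Normal_Form.Determinant" "Jordan_Normal_Form.Char_Poly"
    "HOL-Combinatorics.Permutations"
begin

definition SO3 :: "real mat set" where
  "SO3 = {Q. Q \<in> carrier_mat 3 3 \<and> transpose_mat Q * Q = 1\<^sub>m 3 \<and> det Q = 1}"

definition desc_reordering :: "(nat \<Rightarrow> real) \<Rightarrow> (nat \<Rightarrow> nat) \<Rightarrow> bool" where
  "desc_reordering a \<sigma> \<longleftrightarrow> \<sigma> permutes {0,1,2} \<and> a (\<sigma> 0) \<ge> a (\<sigma> 1) \<and> a (\<sigma> 1) \<ge> a (\<sigma> 2)"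

end

theory Submission
  imports Defs
begin

lemma det2: assumes A: "(A :: 'a :: comm_ring_1 mat) \<in> carrier_mat 2 2"
  shows "det A = A$$(0,0) * A$$(1,1) - A$$(0,1) * A$$(1,0)"
proof -
  have "det A = (\<Sum>j<2. A $$ (0,j) * cofactor A 0 j)" by (rule laplace_expansion_row[OF A], simp)
  also have "\<dots> = A$$(0,0) * cofactor A 0 0 + A$$(0,1) * cofactor A 0 1" by (simp add: numeral_2_eq_2)
  also have "cofactor A 0 0 = A$$(1,1)" unfolding cofactor_def
    by (subst det_single, insert A, auto simp: mat_delete_def numeral_2_eq_2)
  also have "cofactor A 0 1 = - A$$(1,0)" unfolding cofactor_def
    by (subst det_single, insert A, auto simp: mat_delete_def numeral_2_eq_2)
  finally show ?thesis by (simp add: algebra_simps)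
qed

lemma det3: assumes A: "(A :: 'a :: comm_ring_1 mat) \<in> carrier_mat 3 3"
  shows "det A = A$$(0,0) * A$$(1,1) * A$$(2,2) - A$$(0,0) * A$$(1,2) * A$$(2,1)
     - A$$(0,1) * A$$(1,0) * A$$(2,2) + A$$(0,1) * A$$(1,2) * A$$(2,0)
     + A$$(0,2) * A$$(1,0) * A$$(2,1) - A$$(0,2) * A$$(1,1) * A$$(2,0)"
proof -
  have "det A = (\<Sum>j<3. A $$ (0,j) * cofactor A 0 j)" by (rule laplace_expansion_row[OF A], simp)
  also have "\<dots> = A$$(0,0) * cofactor A 0 0 + A$$(0,1) * cofactor A 0 1 + A$$(0,2) * cofactor A 0 2"
    proof -
    have "{..<3::nat} = {0,1,2}" by auto
    thus ?thesis by (simp add: algebra_simps)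
  qed
  also have "cofactor A 0 0 = A$$(1,1) * A$$(2,2) - A$$(1,2) * A$$(2,1)" unfolding cofactor_def
    by (subst det2, insert A, auto simp: mat_delete_def numeral_2_eq_2)
  also have "cofactor A 0 1 = - (A$$(1,0) * A$$(2,2) - A$$(1,2) * A$$(2,0))" unfolding cofactor_def
    by (subst det2, insert A, auto simp: mat_delete_def numeral_2_eq_2)
  also have "cofactor A 0 2 = A$$(1,0) * A$$(2,1) - A$$(1,1) * A$$(2,0)" unfolding cofactor_def
    by (subst det2, insert A, auto simp: mat_delete_def numeral_2_eq_2)
  finally show ?thesis by (simp add: algebra_simps)
qed

lemma char_poly3: assumes A: "(A :: 'a :: {idom,ring_char_0} mat) \<in> carrier_mat 3 3"
  shows "char_poly A = [: - det A, A$$(0,0)*A$$(1,1) - A$$(0,1)*A$$(1,0) + A$$(0,0)*A$$(2,2) - A$$(0,2)*A$$(2,0)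
     + A$$(1,1)*A$$(2,2) - A$$(1,2)*A$$(2,1), - (A$$(0,0) + A$$(1,1) + A$$(2,2)), 1:]"
proof -
  have C: "char_poly_matrix A \<in> carrier_mat 3 3" using A by simp
  show ?thesis
    unfolding char_poly_def det3[OF C] det3[OF A]
    using A by (auto simp: char_poly_matrix_def poly_eq_poly_eq_iff[symmetric] algebra_simps)
qed

lemma rot_cross:
  fixes a b c d e f g h k :: real
  assumes n0: "a^2 + d^2 + g^2 = 1" and n1: "b^2 + e^2 + h^2 = 1" and n2: "c^2 + f^2 + k^2 = 1"
    and o01: "a*b + d*e + g*h = 0" and o02: "a*c + d*f + g*k = 0"
    and o12: "b*c + e*f + h*k = 0"
    and d: "a*e*k - a*f*h - b*d*k + b*f*g + c*d*h - c*e*g = 1"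
  shows "k = a*e - b*d" "f = g*b - a*h" "c = d*h - g*e"
proof -
  have "(c - (d*h - g*e))^2 + (f - (g*b - a*h))^2 + (k - (a*e - b*d))^2
     = (c^2 + f^2 + k^2) - 2 * (a*e*k - a*f*h - b*d*k + b*f*g + c*d*h - c*e*g)
       + ((a^2 + d^2 + g^2) * (b^2 + e^2 + h^2) - (a*b + d*e + g*h)^2)"
    by (simp add: algebra_simps power2_eq_square)
  also have "\<dots> = 0" using n0 n1 n2 o01 d by simp
  finally have z: "(c - (d*h - g*e))^2 + (f - (g*b - a*h))^2 + (k - (a*e - b*d))^2 = 0" .
  have "(c - (d*h - g*e))^2 = 0" "(f - (g*b - a*h))^2 = 0" "(k - (a*e - b*d))^2 = 0"
    using z by (smt (verit) zero_le_power2)+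
  thus "k = a*e - b*d" "f = g*b - a*h" "c = d*h - g*e" by auto
qed

lemma rot_facts:
  fixes a b c d e f g h k :: real
  assumes n0: "a^2 + d^2 + g^2 = 1" and n1: "b^2 + e^2 + h^2 = 1" and n2: "c^2 + f^2 + k^2 = 1"
    and o01: "a*b + d*e + g*h = 0" and o02: "a*c + d*f + g*k = 0"
    and o12: "b*c + e*f + h*k = 0"
    and d: "a*e*k - a*f*h - b*d*k + b*f*g + c*d*h - c*e*g = 1"
  shows "k = a*e - b*d" "e = a*k - c*g" "a = e*k - f*h"
    "1 + a + e + k \<ge> 0"
proof -
  show c2: "k = a*e - b*d" using rot_cross[OF n0 n1 n2 o01 o02 o12 d] by auto
  have "e = k*a - c*g" 
    by (rule rot_cross(2)[where a=c and b=a and c=b and d=f and e=d and f=e and g=k and h=g and k=h], insert assms, auto simp: algebra_simps)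
  thus c1: "e = a*k - c*g" by (simp add: algebra_simps)
  have "a = e*k - h*f" 
    by (rule rot_cross(3)[where a=b and b=c and c=a and d=e and e=f and f=d and g=h and h=k and k=g], insert assms, auto simp: algebra_simps)
  thus c0: "a = e*k - f*h" by (simp add: algebra_simps)
  define t where "t = a + e + k"
  have e1: "b*d = a*e - k" "c*g = a*k - e" "f*h = e*k - a" using c0 c1 c2 by (linarith, linarith, linarith)
  have e2: "(b - d)^2 + (c - g)^2 + (f - h)^2 = (a^2+d^2+g^2) + (b^2+e^2+h^2) + (c^2+f^2+k^2) - (a^2+e^2+k^2) - 2*(b*d) - 2*(c*g) - 2*(f*h)"
    by (simp add: power2_diff)
  have "(1+t)*(3-t) = (b - d)^2 + (c - g)^2 + (f - h)^2"
    unfolding e2 e1 n0 n1 n2 t_def by (simp add: power2_eq_square algebra_simps)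
  hence nn: "(1+t)*(3-t) \<ge> 0" by simp
  have "a^2 \<le> 1" using n0 zero_le_power2[of d] zero_le_power2[of g] by linarith
  hence "a \<le> 1" by (simp add: abs_square_le_1)
  have "e^2 \<le> 1" using n1 zero_le_power2[of b] zero_le_power2[of h] by linarith
  hence "e \<le> 1" by (simp add: abs_square_le_1)
  have "k^2 \<le> 1" using n2 zero_le_power2[of c] zero_le_power2[of f] by linarith
  hence "k \<le> 1" by (simp add: abs_square_le_1)
  note this \<open>a \<le> 1\<close> \<open>e \<le> 1\<close>
  hence "t \<le> 3" unfolding t_def by simp
  show "1 + a + e + k \<ge> 0"
  proof (rule ccontr)
    assume "\<not> ?thesis" hence "1 + t < 0" unfolding t_def by simp
    with \<open>t \<le> 3\<close> have "(1+t)*(3-t) < 0" by (simp add: mult_neg_pos)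
    with nn show False by simp
  qed
qed

lemma weights_exist:
  fixes a b c \<alpha> \<tau> :: real
  assumes ab: "a \<ge> b" and bc: "b \<ge> \<bar>c\<bar>"
    and F1: "\<tau> \<le> a*\<alpha>" and F3: "c*\<alpha> \<le> \<tau>"
    and F2: "\<tau> + a*\<alpha> \<le> 2*(a+b)*(a+c)" and F4: "\<tau> + c*\<alpha> \<le> 2*(a+c)*(b+c)"
    and F5: "0 \<le> \<alpha>" "\<alpha> \<le> 2*(a+b)"
  shows "\<exists>wB wC wD. wB \<ge> 0 \<and> wC \<ge> 0 \<and> wD \<ge> 0 \<and> wB + wC + wD \<le> 1
     \<and> \<alpha> = 2*(b+c)*wB + 2*(a+c)*wC + 2*(a+b)*wD
     \<and> \<tau> = 2*a*(b+c)*wB + 2*b*(a+c)*wC + 2*c*(a+b)*wD"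
proof (cases "\<tau> > b*\<alpha>")
  case True
  have "(a - b) * \<alpha> > 0" using True F1 by (simp add: algebra_simps)
  hence amb: "a > b" and al: "\<alpha> > 0" using ab by (auto simp: zero_less_mult_iff)
  define yB where "yB = (\<tau> - b*\<alpha>)/(a-b)"
  define yC where "yC = (a*\<alpha> - \<tau>)/(a-b)"
  have yB: "yB \<ge> 0" "yC \<ge> 0" using True F1 amb unfolding yB_def yC_def by auto
  have nz: "a - b \<noteq> 0" using amb by simp
  have "yB + yC = ((a-b)*\<alpha>)/(a-b)" unfolding yB_def yC_def by (simp add: add_divide_distrib[symmetric] algebra_simps)
  moreover have "a*yB + b*yC = ((a-b)*\<tau>)/(a-b)" unfolding yB_def yC_def 
    by (simp add: add_divide_distrib[symmetric] times_divide_eq_right[symmetric] algebra_simps)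
  ultimately have ysum: "yB + yC = \<alpha>" "a*yB + b*yC = \<tau>" using nz by auto
  have apc: "a + c > 0" using amb bc by linarith
  show ?thesis
  proof (cases "b + c = 0")
    case True
    hence "c = -b" by simp
    hence "c*\<alpha> = -(b*\<alpha>)" by simp
    moreover have "\<tau> + c*\<alpha> \<le> 0" using F4 True by simp
    ultimately have "\<tau> \<le> b*\<alpha>" by linarith
    with \<open>\<tau> > b*\<alpha>\<close> show ?thesis by simp
  next
    case False
    hence bpc: "b + c > 0" using bc by linarith
    define wB where "wB = yB / (2*(b+c))"
    define wC where "wC = yC / (2*(a+c))"
    have "(a+c)*yB + (b+c)*yC \<le> 2*(a+c)*(b+c)"
    proof -
      have "(a+c)*yB + (b+c)*yC = \<tau> + c*\<alpha>" unfolding ysum[symmetric] by (simp add: algebra_simps)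
      thus ?thesis using F4 by simp
    qed
    moreover have "wB + wC = ((a+c)*yB + (b+c)*yC) / (2*(b+c)*(a+c))"
    proof -
      have "wB + wC = (yB*(2*(a+c)) + yC*(2*(b+c))) / ((2*(b+c))*(2*(a+c)))" 
        unfolding wB_def wC_def using apc bpc by (intro add_frac_eq) simp_all
      also have "\<dots> = (2*((a+c)*yB + (b+c)*yC)) / (2*(2*(b+c)*(a+c)))" by (simp add: algebra_simps)
      also have "\<dots> = ((a+c)*yB + (b+c)*yC) / (2*(b+c)*(a+c))" by (rule mult_divide_mult_cancel_left) simp
      finally show ?thesis .
    qed
    moreover have "2*(b+c)*(a+c) > 0" using apc bpc by simp
    ultimately have "wB + wC \<le> 1" by (simp add: pos_divide_le_eq algebra_simps)
    moreover have hB: "2*(b+c)*wB = yB" unfolding wB_def using bpc by simp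
    moreover have hC: "2*(a+c)*wC = yC" unfolding wC_def using apc by simp
    moreover have "\<alpha> = 2*(b+c)*wB + 2*(a+c)*wC + 2*(a+b)*0" using hB hC ysum by simp
    moreover have "\<tau> = a*(2*(b+c)*wB) + b*(2*(a+c)*wC) + c*(2*(a+b)*0)" using hB hC ysum by simp
    hence "\<tau> = 2*a*(b+c)*wB + 2*b*(a+c)*wC + 2*c*(a+b)*0" by (simp add: algebra_simps)
    ultimately show ?thesis using yB apc bpc unfolding wB_def wC_def
      by (intro exI[of _ wB] exI[of _ wC] exI[of _ 0]) (auto simp: wB_def wC_def)
  qed
next
  case False
  hence tb: "\<tau> \<le> b*\<alpha>" by simp
  show ?thesis
  proof (cases "b = c")
    case True
    hence cnn: "c \<ge> 0" using bc by simp
    show ?thesis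
    proof (cases "a + b = 0")
      case True
      hence "a = 0" "b = 0" "c = 0" using ab bc by auto
      hence "\<alpha> = 0" "\<tau> = 0" using F5 F1 F3 by auto
      thus ?thesis by (intro exI[of _ 0]) simp
    next
      case False
      hence apb: "a + b > 0" using ab bc by linarith
      have "\<tau> = b*\<alpha>" using tb F3 True by simp
      thus ?thesis using apb F5 True
        by (intro exI[of _ 0] exI[of _ 0] exI[of _ "\<alpha>/(2*(a+b))"]) (auto simp: field_simps)
    qed
  next
    case False
    hence bmc: "b > c" using bc by simp
    have apb: "a + b > 0" using bmc ab bc by linarith
    define yC where "yC = (\<tau> - c*\<alpha>)/(b-c)"
    define yD where "yD = (b*\<alpha> - \<tau>)/(b-c)"
    have yC: "yC \<ge> 0" "yD \<ge> 0" using tb F3 bmc unfolding yC_def yD_def by auto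
    have nz: "b - c \<noteq> 0" using bmc by simp
  have "yC + yD = ((b-c)*\<alpha>)/(b-c)" unfolding yC_def yD_def by (simp add: add_divide_distrib[symmetric] algebra_simps)
  moreover have "b*yC + c*yD = ((b-c)*\<tau>)/(b-c)" unfolding yC_def yD_def 
    by (simp add: add_divide_distrib[symmetric] times_divide_eq_right[symmetric] algebra_simps)
  ultimately have ysum: "yC + yD = \<alpha>" "b*yC + c*yD = \<tau>" using nz by auto
    show ?thesis
    proof (cases "a + c = 0")
      case True
      hence "a = -c" by simp
      hence "a*\<alpha> = -(c*\<alpha>)" by simp
      moreover have "\<tau> + a*\<alpha> \<le> 0" using F2 True by simp
      ultimately have "\<tau> = c*\<alpha>" using F3 by linarith
      hence "yC = 0" unfolding yC_def by simp
      hence "yD = \<alpha>" using ysum by simp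
      show ?thesis using apb F5 \<open>yC = 0\<close> \<open>yD = \<alpha>\<close> ysum
        by (intro exI[of _ 0] exI[of _ 0] exI[of _ "\<alpha>/(2*(a+b))"]) (auto simp: field_simps)
    next
      case False
      hence apc: "a + c > 0" using ab bc by linarith
      define wC where "wC = yC / (2*(a+c))"
      define wD where "wD = yD / (2*(a+b))"
      have "(a+b)*yC + (a+c)*yD \<le> 2*(a+b)*(a+c)"
      proof -
        have "(a+b)*yC + (a+c)*yD = \<tau> + a*\<alpha>" unfolding ysum[symmetric] by (simp add: algebra_simps)
        thus ?thesis using F2 by simp
      qed
    moreover have "wC + wD = ((a+b)*yC + (a+c)*yD) / (2*(a+c)*(a+b))"
      proof -
        have "wC + wD = (yC*(2*(a+b)) + yD*(2*(a+c))) / ((2*(a+c))*(2*(a+b)))" 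
          unfolding wC_def wD_def using apc apb by (intro add_frac_eq) simp_all
        also have "\<dots> = (2*((a+b)*yC + (a+c)*yD)) / (2*(2*(a+c)*(a+b)))" by (simp add: algebra_simps)
        also have "\<dots> = ((a+b)*yC + (a+c)*yD) / (2*(a+c)*(a+b))" by (rule mult_divide_mult_cancel_left) simp
        finally show ?thesis .
      qed
      moreover have "2*(a+c)*(a+b) > 0" using apc apb by simp
      ultimately have "wC + wD \<le> 1" by (simp add: pos_divide_le_eq algebra_simps)
      moreover have hC: "2*(a+c)*wC = yC" unfolding wC_def using apc by simp
      moreover have hD: "2*(a+b)*wD = yD" unfolding wD_def using apb by simp
      moreover have "\<alpha> = 2*(b+c)*0 + 2*(a+c)*wC + 2*(a+b)*wD" using hC hD ysum by simp
      moreover have "\<tau> = a*(2*(b+c)*0) + b*(2*(a+c)*wC) + c*(2*(a+b)*wD)" using hC hD ysum by simp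
      hence "\<tau> = 2*a*(b+c)*0 + 2*b*(a+c)*wC + 2*c*(a+b)*wD" by (simp add: algebra_simps)
      ultimately show ?thesis using yC apc apb
        by (intro exI[of _ 0] exI[of _ wC] exI[of _ wD]) (auto simp: wC_def wD_def)
    qed
  qed
qed

definition tet :: "real \<Rightarrow> real \<Rightarrow> real \<Rightarrow> bool" where
  "tet q0 q1 q2 \<longleftrightarrow> 0 \<le> 1+q0+q1+q2 \<and> 0 \<le> 1+q0-q1-q2 \<and> 0 \<le> 1-q0+q1-q2 \<and> 0 \<le> 1-q0-q1+q2"

definition RZ :: "real \<Rightarrow> real \<Rightarrow> real \<Rightarrow> real \<Rightarrow> real \<Rightarrow> bool" where
  "RZ x y z u v \<longleftrightarrow> (\<exists>q0 q1 q2. tet q0 q1 q2 \<and> u = x*q0+y*q1+z*q2 \<and> v = y*z*q0 + x*z*q1 + x*y*q2)"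

definition FF :: "real \<Rightarrow> real \<Rightarrow> real \<Rightarrow> real \<Rightarrow> real \<Rightarrow> bool" where
  "FF a b c u v \<longleftrightarrow> 0 \<le> a^2 - a*u + v - b*c \<and> 0 \<le> a^2 + a*u + v + b*c \<and> c^2 - c*u + v - a*b \<le> 0
     \<and> 0 \<le> c^2 + c*u + v + a*b \<and> c - a - b \<le> u \<and> u \<le> a + b + c"

lemma RZ_imp_FF:
  assumes ab: "a \<ge> b" and bc: "b \<ge> \<bar>c\<bar>" and R: "RZ a b c u v"
  shows "FF a b c u v"
proof -
  obtain q0 q1 q2 where t: "tet q0 q1 q2" and u: "u = a*q0+b*q1+c*q2" and v: "v = b*c*q0 + a*c*q1 + a*b*q2"
    using R unfolding RZ_def by blast
  define fA where "fA = 1+q0+q1+q2"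
  define fB where "fB = 1+q0-q1-q2"
  define fC where "fC = 1-q0+q1-q2"
  define fD where "fD = 1-q0-q1+q2"
  have f: "fA \<ge> 0" "fB \<ge> 0" "fC \<ge> 0" "fD \<ge> 0" using t unfolding tet_def fA_def fB_def fC_def fD_def by auto
  have s: "a - b \<ge> 0" "a + c \<ge> 0" "a - c \<ge> 0" "b + c \<ge> 0" "b - c \<ge> 0" "a + b \<ge> 0" "a \<ge> 0" "b \<ge> 0"
    using ab bc by linarith+
  have e1: "a^2 - a*u + v - b*c = (fC*((a-b)*(a+c)) + fD*((a+b)*(a-c)))/2"
    unfolding u v fC_def fD_def by (simp add: algebra_simps power2_eq_square)
  have e2: "a^2 + a*u + v + b*c = (fA*((a+b)*(a+c)) + fB*((a-b)*(a-c)))/2"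
    unfolding u v fA_def fB_def by (simp add: algebra_simps power2_eq_square)
  have e3: "-(c^2 - c*u + v - a*b) = (fB*((a-c)*(b+c)) + fC*((a+c)*(b-c)))/2"
    unfolding u v fB_def fC_def by (simp add: algebra_simps power2_eq_square)
  have e4: "c^2 + c*u + v + a*b = (fA*((a+c)*(b+c)) + fD*((a-c)*(b-c)))/2"
    unfolding u v fA_def fD_def by (simp add: algebra_simps power2_eq_square)
  have e5: "a + b + c - u = (fB*(b+c) + fC*(a+c) + fD*(a+b))/2"
    unfolding u fB_def fC_def fD_def by (simp add: algebra_simps)
  have e6: "u - (c - a - b) = (fA*(a+b) + fB*(a-c) + fC*(b-c))/2"
    unfolding u fA_def fB_def fC_def by (simp add: algebra_simps)
  have "0 \<le> (fC*((a-b)*(a+c)) + fD*((a+b)*(a-c)))/2" using f s by simp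
  moreover have "0 \<le> (fA*((a+b)*(a+c)) + fB*((a-b)*(a-c)))/2" using f s by simp
  moreover have "0 \<le> (fB*((a-c)*(b+c)) + fC*((a+c)*(b-c)))/2" using f s by simp
  moreover have "0 \<le> (fA*((a+c)*(b+c)) + fD*((a-c)*(b-c)))/2" using f s by simp
  moreover have "0 \<le> (fB*(b+c) + fC*(a+c) + fD*(a+b))/2" using f s by simp
  moreover have "0 \<le> (fA*(a+b) + fB*(a-c) + fC*(b-c))/2" using f s by simp
  ultimately show ?thesis unfolding FF_def using e1 e2 e3 e4 e5 e6 by linarith
qed

lemma FF_imp_RZ:
  assumes ab: "a \<ge> b" and bc: "b \<ge> \<bar>c\<bar>" and F: "FF a b c u v"
  shows "RZ a b c u v"
proof -
  define \<alpha> where "\<alpha> = a + b + c - u"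
  define \<tau> where "\<tau> = a*b + b*c + c*a - v"
  have F1: "\<tau> \<le> a*\<alpha>" and F3: "c*\<alpha> \<le> \<tau>"
    and F2: "\<tau> + a*\<alpha> \<le> 2*(a+b)*(a+c)" and F4: "\<tau> + c*\<alpha> \<le> 2*(a+c)*(b+c)"
    and F5: "0 \<le> \<alpha>" "\<alpha> \<le> 2*(a+b)"
    using F unfolding FF_def \<alpha>_def \<tau>_def by (simp_all add: algebra_simps power2_eq_square)
  obtain wB wC wD where w: "wB \<ge> 0" "wC \<ge> 0" "wD \<ge> 0" "wB + wC + wD \<le> 1"
     and al: "\<alpha> = 2*(b+c)*wB + 2*(a+c)*wC + 2*(a+b)*wD"
     and ta: "\<tau> = 2*a*(b+c)*wB + 2*b*(a+c)*wC + 2*c*(a+b)*wD"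
    using weights_exist[OF ab bc F1 F3 F2 F4 F5] by blast
  define q0 where "q0 = 1 - 2*(wC+wD)"
  define q1 where "q1 = 1 - 2*(wB+wD)"
  define q2 where "q2 = 1 - 2*(wB+wC)"
  have "tet q0 q1 q2" unfolding tet_def q0_def q1_def q2_def using w by auto
  moreover have "u = a*q0+b*q1+c*q2" using al unfolding \<alpha>_def q0_def q1_def q2_def by (simp add: algebra_simps)
  moreover have "v = b*c*q0 + a*c*q1 + a*b*q2" using ta unfolding \<tau>_def q0_def q1_def q2_def by (simp add: algebra_simps)
  ultimately show ?thesis unfolding RZ_def by blast
qed

lemma Fe_real:
  fixes a b c ra rb rc u v :: real
  assumes u: "u = ra+rb+rc" and v: "v = ra*rb+ra*rc+rb*rc" and d: "ra*rb*rc = a*b*c"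
  shows "a*(a^2 - a*u + v - b*c) = (a-ra)*(a-rb)*(a-rc)"
    "a*(a^2 + a*u + v + b*c) = (a+ra)*(a+rb)*(a+rc)"
    "c*(c^2 - c*u + v - a*b) = (c-ra)*(c-rb)*(c-rc)"
    "c*(c^2 + c*u + v + a*b) = (c+ra)*(c+rb)*(c+rc)"
proof -
  have d': "a*b*c = ra*rb*rc" using d by simp
  show "a*(a^2 - a*u + v - b*c) = (a-ra)*(a-rb)*(a-rc)"
  proof -
    have "a*(a^2 - a*u + v - b*c) = a^3 - a^2*u + a*v - a*b*c" by (simp add: algebra_simps power2_eq_square power3_eq_cube)
    thus ?thesis unfolding d' u v by (simp add: algebra_simps power2_eq_square power3_eq_cube)
  qed
  show "a*(a^2 + a*u + v + b*c) = (a+ra)*(a+rb)*(a+rc)"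
  proof -
    have "a*(a^2 + a*u + v + b*c) = a^3 + a^2*u + a*v + a*b*c" by (simp add: algebra_simps power2_eq_square power3_eq_cube)
    thus ?thesis unfolding d' u v by (simp add: algebra_simps power2_eq_square power3_eq_cube)
  qed
  show "c*(c^2 - c*u + v - a*b) = (c-ra)*(c-rb)*(c-rc)"
  proof -
    have "c*(c^2 - c*u + v - a*b) = c^3 - c^2*u + c*v - a*b*c" by (simp add: algebra_simps power2_eq_square power3_eq_cube)
    thus ?thesis unfolding d' u v by (simp add: algebra_simps power2_eq_square power3_eq_cube)
  qed
  show "c*(c^2 + c*u + v + a*b) = (c+ra)*(c+rb)*(c+rc)"
  proof -
    have "c*(c^2 + c*u + v + a*b) = c^3 + c^2*u + c*v + a*b*c" by (simp add: algebra_simps power2_eq_square power3_eq_cube)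
    thus ?thesis unfolding d' u v by (simp add: algebra_simps power2_eq_square power3_eq_cube)
  qed
qed

lemma Fe_cplx:
  fixes a b c x y r u v :: real
  assumes u: "u = 2*x + r" and v: "v = x^2 + y^2 + 2*x*r" and d: "(x^2+y^2)*r = a*b*c"
  shows "a*(a^2 - a*u + v - b*c) = (a-r)*((a-x)^2+y^2)"
    "a*(a^2 + a*u + v + b*c) = (a+r)*((a+x)^2+y^2)"
    "c*(c^2 - c*u + v - a*b) = (c-r)*((c-x)^2+y^2)"
    "c*(c^2 + c*u + v + a*b) = (c+r)*((c+x)^2+y^2)"
proof -
  have d': "a*b*c = (x^2+y^2)*r" using d by simp
  show "a*(a^2 - a*u + v - b*c) = (a-r)*((a-x)^2+y^2)"
  proof -
    have "a*(a^2 - a*u + v - b*c) = a^3 - a^2*u + a*v - a*b*c" by (simp add: algebra_simps power2_eq_square power3_eq_cube)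
    thus ?thesis unfolding d' u v by (simp add: algebra_simps power2_eq_square power3_eq_cube)
  qed
  show "a*(a^2 + a*u + v + b*c) = (a+r)*((a+x)^2+y^2)"
  proof -
    have "a*(a^2 + a*u + v + b*c) = a^3 + a^2*u + a*v + a*b*c" by (simp add: algebra_simps power2_eq_square power3_eq_cube)
    thus ?thesis unfolding d' u v by (simp add: algebra_simps power2_eq_square power3_eq_cube)
  qed
  show "c*(c^2 - c*u + v - a*b) = (c-r)*((c-x)^2+y^2)"
  proof -
    have "c*(c^2 - c*u + v - a*b) = c^3 - c^2*u + c*v - a*b*c" by (simp add: algebra_simps power2_eq_square power3_eq_cube)
    thus ?thesis unfolding d' u v by (simp add: algebra_simps power2_eq_square power3_eq_cube)
  qed
  show "c*(c^2 + c*u + v + a*b) = (c+r)*((c+x)^2+y^2)"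
  proof -
    have "c*(c^2 + c*u + v + a*b) = c^3 + c^2*u + c*v + a*b*c" by (simp add: algebra_simps power2_eq_square power3_eq_cube)
    thus ?thesis unfolding d' u v by (simp add: algebra_simps power2_eq_square power3_eq_cube)
  qed
qed

lemma FF_neg: "FF a b c u v \<Longrightarrow> FF a b (-c) (-u) v"
  unfolding FF_def by (simp add: algebra_simps power2_eq_square)

lemma FF5:
  assumes ab: "a \<ge> b" and bc: "b \<ge> \<bar>c\<bar>"
    and F1: "0 \<le> a^2 - a*u + v - b*c" and F2: "0 \<le> a^2 + a*u + v + b*c" and F3: "c^2 - c*u + v - a*b \<le> 0"
    and F4: "0 \<le> c^2 + c*u + v + a*b" and U: "\<bar>u\<bar> \<le> 3*a"
  shows "FF a b c u v"
proof -
  have e1: "(a^2 - a*u + v - b*c) - (c^2 - c*u + v - a*b) = (a-c)*(a+b+c-u)" by (simp add: algebra_simps power2_eq_square)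
  have e2: "(a^2 + a*u + v + b*c) - (c^2 - c*u + v - a*b) = (a+c)*(u - (c-a-b))" by (simp add: algebra_simps power2_eq_square)
  have "u \<le> a+b+c"
  proof (cases "a > c")
    case True
    have "0 \<le> (a-c)*(a+b+c-u)" using e1 F1 F3 by linarith
    thus ?thesis using True by (simp add: zero_le_mult_iff)
  next
    case False
    hence "a = c" "b = a" using ab bc by auto
    thus ?thesis using U by simp
  qed
  moreover have "c - a - b \<le> u"
  proof (cases "a + c > 0")
    case True
    have "0 \<le> (a+c)*(u - (c-a-b))" using e2 F2 F3 by linarith
    thus ?thesis using True by (simp add: zero_le_mult_iff)
  next
    case False
    hence "c = -a" "b = a" using ab bc by auto
    thus ?thesis using U by simp
  qed
  ultimately show ?thesis unfolding FF_def using F1 F2 F3 F4 by simp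
qed

lemma RA_core:
  fixes a b c ra rb rc u v :: real
  assumes ab: "a \<ge> b" and bc: "b \<ge> \<bar>c\<bar>" and apos: "a > 0"
    and u: "u = ra+rb+rc" and v: "v = ra*rb+ra*rc+rb*rc" and d: "ra*rb*rc = a*b*c"
    and F: "FF a b c u v" and ra: "ra > a" and rb: "rb \<le> a" and rc: "a \<le> rc"
  shows False
proof -
  note E = Fe_real[OF u v d]
  have F3: "c^2 - c*u + v - a*b \<le> 0" and F5: "u \<le> a+b+c" using F unfolding FF_def by auto
  have rap: "ra > 0" "rc > 0" using ra rc apos by auto
  consider "c > 0" | "c < 0" | "c = 0" by linarith
  thus False
  proof cases
    case 1
    have "(c-ra)*((c-rb)*(c-rc)) \<le> 0" using E(3) F3 1 by (simp add: mult_nonneg_nonpos mult.assoc[symmetric] flip: E(3))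
    moreover have "c - ra < 0" using ra 1 bc ab by linarith
    ultimately have q: "(c-rb)*(c-rc) \<ge> 0" by (simp add: mult_le_0_iff)
    show False
    proof (cases "rc > c")
      case True
      hence "c - rb \<le> 0" using q by (auto simp: zero_le_mult_iff)
      hence r1c: "rb \<ge> c" by simp
      have "rb*rc \<ge> c*a" using r1c rc 1 apos by (intro mult_mono) auto
      moreover have "rb*rc > 0" using r1c 1 rap by simp
      ultimately have "ra*(rb*rc) > a*(c*a)" 
      proof -
        assume h: "rb*rc \<ge> c*a" "rb*rc > 0"
        have "ra*(rb*rc) > a*(rb*rc)" using ra h(2) by (rule mult_strict_right_mono)
        moreover have "a*(rb*rc) \<ge> a*(c*a)" using h(1) apos by (simp add: mult_left_mono)
        ultimately show ?thesis by simp
      qed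
      moreover have "a*(c*a) \<ge> a*b*c" using ab 1 apos by (simp add: mult_left_mono mult_right_mono mult.commute mult.left_commute)
      ultimately show False using d by (simp add: mult.assoc)
    next
      case False
      hence "rc = a" "c = a" "b = a" using rc ab bc 1 by auto
      hence "ra*rb = a^2" using d apos by (simp add: power2_eq_square power3_eq_cube algebra_simps)
      moreover have "ra + rb \<le> 2*a" using F5 u \<open>rc = a\<close> \<open>c = a\<close> \<open>b = a\<close> by simp
      moreover have "(ra - a)^2 > 0" using ra by simp
      ultimately have "(ra + rb)*ra > 2*a*ra" by (simp add: algebra_simps power2_eq_square)
      hence "ra + rb > 2*a" using rap by simp
      thus False using \<open>ra + rb \<le> 2*a\<close> by simp
    qed
  next
    case 2
    have "c*(c^2 - c*u + v - a*b) \<ge> 0" using F3 2 by (simp add: mult_nonpos_nonpos)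
    hence "(c-ra)*((c-rb)*(c-rc)) \<ge> 0" using E(3) by (simp add: mult.assoc)
    moreover have "c - ra < 0" using ra 2 apos by linarith
    ultimately have q: "(c-rb)*(c-rc) \<le> 0" by (simp add: zero_le_mult_iff)
    have "c - rc < 0" using 2 rap by linarith
    hence r1c: "rb \<le> c" using q by (auto simp: mult_le_0_iff)
    have "ra*rc > a*a"
    proof -
      have "a*a \<le> a*rc" using rc apos by simp
      moreover have "a*rc < ra*rc" using ra rap by simp
      ultimately show ?thesis by simp
    qed
    hence "rb*(ra*rc) < c*(a*a)"
    proof -
      assume h: "ra*rc > a*a"
      have "rb*(ra*rc) \<le> c*(ra*rc)" using r1c h rap by (intro mult_right_mono) auto
      moreover have "c*(ra*rc) < c*(a*a)" using h 2 by (simp add: mult_strict_left_mono_neg)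
      ultimately show ?thesis by simp
    qed
    moreover have "c*(a*a) \<le> c*(a*b)" using 2 ab apos by (simp add: mult_left_mono_neg)
    ultimately show False using d by (simp add: algebra_simps)
  next
    case 3
    hence "rb = 0" using d rap by simp
    hence "v = ra*rc" using v by simp
    moreover have "ra*rc > a*a" 
    proof -
      have "a*a \<le> a*rc" using rc apos by simp
      moreover have "a*rc < ra*rc" using ra rap by simp
      ultimately show ?thesis by simp
    qed
    moreover have "a*a \<ge> a*b" using ab apos by simp
    ultimately show False using F3 3 by simp
  qed
qed

lemma real_a0:
  fixes a b c ra rb rc u v :: real
  assumes ab: "a \<ge> b" and bc: "b \<ge> \<bar>c\<bar>" and a0: "a = 0"
    and u: "u = ra+rb+rc" and v: "v = ra*rb+ra*rc+rb*rc" and F: "FF a b c u v"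
  shows "ra = 0 \<and> rb = 0 \<and> rc = 0"
proof -
  have "b = 0" "c = 0" using ab bc a0 by auto
  hence "v = 0" "u = 0" using F a0 unfolding FF_def by auto
  hence "ra^2 + rb^2 + rc^2 = 0" 
  proof -
    have "ra^2 + rb^2 + rc^2 = u^2 - 2*v" unfolding u v by (simp add: algebra_simps power2_eq_square)
    thus ?thesis using \<open>v = 0\<close> \<open>u = 0\<close> by simp
  qed
  thus ?thesis by (simp add: add_nonneg_eq_0_iff)
qed

lemma RA:
  fixes a b c ra rb rc u v :: real
  assumes ab: "a \<ge> b" and bc: "b \<ge> \<bar>c\<bar>"
    and u: "u = ra+rb+rc" and v: "v = ra*rb+ra*rc+rb*rc" and d: "ra*rb*rc = a*b*c"
    and F: "FF a b c u v"
  shows "ra \<le> a"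
proof (rule ccontr)
  assume "\<not> ra \<le> a" hence ra: "ra > a" by simp
  show False
  proof (cases "a = 0")
    case True thus False using real_a0[OF ab bc True u v F] ra by simp
  next
    case False
    hence apos: "a > 0" using ab bc by linarith
    have F1: "0 \<le> a^2 - a*u + v - b*c" using F unfolding FF_def by simp
    have "a*(a^2 - a*u + v - b*c) \<ge> 0" using F1 apos by simp
    hence "(a-ra)*(a-rb)*(a-rc) \<ge> 0" unfolding Fe_real(1)[OF u v d] .
    hence "(a-ra)*((a-rb)*(a-rc)) \<ge> 0" by (simp add: mult.assoc)
    moreover have "a - ra < 0" using ra by simp
    ultimately have "(a-rb)*(a-rc) \<le> 0" by (simp add: zero_le_mult_iff)
    hence "(rb \<le> a \<and> a \<le> rc) \<or> (rc \<le> a \<and> a \<le> rb)" by (auto simp: mult_le_0_iff)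
    thus False
    proof
      assume h: "rb \<le> a \<and> a \<le> rc"
      show False by (rule RA_core[OF ab bc apos u v d F ra]) (use h in auto)
    next
      assume h: "rc \<le> a \<and> a \<le> rb"
      show False by (rule RA_core[where ra=ra and rb=rc and rc=rb]) (use h ab bc apos u v d F ra in \<open>auto simp: algebra_simps\<close>)
    qed
  qed
qed

lemma real_bounds:
  fixes a b c ra rb rc u v :: real
  assumes ab: "a \<ge> b" and bc: "b \<ge> \<bar>c\<bar>"
    and u: "u = ra+rb+rc" and v: "v = ra*rb+ra*rc+rb*rc" and d: "ra*rb*rc = a*b*c"
    and F: "FF a b c u v"
  shows "\<bar>ra\<bar> \<le> a \<and> \<bar>rb\<bar> \<le> a \<and> \<bar>rc\<bar> \<le> a"
proof -
  have bc': "b \<ge> \<bar>-c\<bar>" using bc by simp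
  have F': "FF a b (-c) (-u) v" using FF_neg[OF F] .
  have u': "-u = (-ra)+(-rb)+(-rc)" using u by simp
  have v': "v = (-ra)*(-rb)+(-ra)*(-rc)+(-rb)*(-rc)" using v by simp
  have d': "(-ra)*(-rb)*(-rc) = a*b*(-c)" using d by simp
  have "ra \<le> a" by (rule RA[OF ab bc u v d F])
  moreover have "-ra \<le> a" by (rule RA[OF ab bc' u' v' d' F'])
  moreover have "rb \<le> a \<and> -rb \<le> a"
  proof -
    have u2: "u = rb+ra+rc" and v2: "v = rb*ra+rb*rc+ra*rc" and d2: "rb*ra*rc = a*b*c"
      using u v d by (simp_all add: ac_simps)
    have u2': "-u = (-rb)+(-ra)+(-rc)" and v2': "v = (-rb)*(-ra)+(-rb)*(-rc)+(-ra)*(-rc)" and d2': "(-rb)*(-ra)*(-rc) = a*b*(-c)"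
      using u' v' d' by (simp_all add: ac_simps)
    show ?thesis using RA[OF ab bc u2 v2 d2 F] RA[OF ab bc' u2' v2' d2' F'] by simp
  qed
  moreover have "rc \<le> a \<and> -rc \<le> a"
  proof -
    have u2: "u = rc+ra+rb" and v2: "v = rc*ra+rc*rb+ra*rb" and d2: "rc*ra*rb = a*b*c"
      using u v d by (simp_all add: ac_simps)
    have u2': "-u = (-rc)+(-ra)+(-rb)" and v2': "v = (-rc)*(-ra)+(-rc)*(-rb)+(-ra)*(-rb)" and d2': "(-rc)*(-ra)*(-rb) = a*b*(-c)"
      using u' v' d' by (simp_all add: ac_simps)
    show ?thesis using RA[OF ab bc u2 v2 d2 F] RA[OF ab bc' u2' v2' d2' F'] by simp
  qed
  ultimately show ?thesis by auto
qed

lemma RB_core: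
  fixes a b c ra rb rc u v :: real
  assumes ab: "a \<ge> b" and bc: "b \<ge> \<bar>c\<bar>" and cpos: "c > 0"
    and u: "u = ra+rb+rc" and v: "v = ra*rb+ra*rc+rb*rc" and d: "ra*rb*rc = a*b*c"
    and F: "FF a b c u v" and bnd: "\<bar>rc\<bar> \<le> a"
    and ra: "\<bar>ra\<bar> < c" and rb: "rb \<le> c" and rc: "c \<le> rc"
  shows False
proof -
  note E = Fe_real[OF u v d]
  have F4: "0 \<le> c^2 + c*u + v + a*b" using F unfolding FF_def by simp
  have "c*(c^2 + c*u + v + a*b) \<ge> 0" using F4 cpos by simp
  hence "(c+ra)*(c+rb)*(c+rc) \<ge> 0" unfolding E(4) .
  hence "(c+ra)*((c+rb)*(c+rc)) \<ge> 0" by (simp add: mult.assoc)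
  moreover have "c + ra > 0" using ra by linarith
  ultimately have q: "(c+rb)*(c+rc) \<ge> 0" by (simp add: zero_le_mult_iff)
  have "c + rc > 0" using rc cpos by linarith
  hence "c + rb \<ge> 0" using q by (auto simp: zero_le_mult_iff)
  hence rbb: "\<bar>rb\<bar> \<le> c" using rb by linarith
  have "\<bar>ra*rb*rc\<bar> = \<bar>ra\<bar>*(\<bar>rb\<bar>*\<bar>rc\<bar>)" by (simp add: abs_mult)
  also have "\<bar>rb\<bar>*\<bar>rc\<bar> \<le> c*a" using rbb bnd cpos by (intro mult_mono) auto
  hence "\<bar>ra\<bar>*(\<bar>rb\<bar>*\<bar>rc\<bar>) \<le> \<bar>ra\<bar>*(c*a)" by (simp add: mult_left_mono)
  also have "\<bar>ra\<bar>*(c*a) < c*(c*a)" using ra cpos bc ab by (intro mult_strict_right_mono) auto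
  also have "c*(c*a) \<le> a*b*c"
  proof -
    have "c*c \<le> b*c" using bc cpos by (intro mult_right_mono) auto
    hence "a*(c*c) \<le> a*(b*c)" using ab bc by (intro mult_left_mono) auto
    thus ?thesis by (simp add: algebra_simps)
  qed
  finally have "\<bar>ra*rb*rc\<bar> < a*b*c" .
  moreover have "\<bar>a*b*c\<bar> = a*b*c" using ab bc cpos by simp
  ultimately show False using d by simp
qed

lemma RB:
  fixes a b c ra rb rc u v :: real
  assumes ab: "a \<ge> b" and bc: "b \<ge> \<bar>c\<bar>" and cnz: "c \<noteq> 0"
    and u: "u = ra+rb+rc" and v: "v = ra*rb+ra*rc+rb*rc" and d: "ra*rb*rc = a*b*c"
    and F: "FF a b c u v"
  shows "\<bar>ra\<bar> \<ge> \<bar>c\<bar>"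
proof -
  have main: "\<bar>ra\<bar> \<ge> c" if ab: "a \<ge> b" and bc: "b \<ge> \<bar>c\<bar>" and cpos: "c > 0"
    and u: "u = ra+rb+rc" and v: "v = ra*rb+ra*rc+rb*rc" and d: "ra*rb*rc = a*b*c"
    and F: "FF a b c u v" for a b c ra rb rc u v :: real
  proof (rule ccontr)
    assume "\<not> \<bar>ra\<bar> \<ge> c" hence ra: "\<bar>ra\<bar> < c" by simp
    note bnds = real_bounds[OF ab bc u v d F]
    note E = Fe_real[OF u v d]
    have F3: "c^2 - c*u + v - a*b \<le> 0" using F unfolding FF_def by simp
    have "c*(c^2 - c*u + v - a*b) \<le> 0" using F3 cpos by (simp add: mult_nonneg_nonpos)
    hence "(c-ra)*(c-rb)*(c-rc) \<le> 0" unfolding E(3) .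
    hence "(c-ra)*((c-rb)*(c-rc)) \<le> 0" by (simp add: mult.assoc)
    moreover have "c - ra > 0" using ra by linarith
    ultimately have "(c-rb)*(c-rc) \<le> 0" by (simp add: mult_le_0_iff)
    hence "(rb \<le> c \<and> c \<le> rc) \<or> (rc \<le> c \<and> c \<le> rb)" by (auto simp: mult_le_0_iff)
    thus False
    proof
      assume h: "rb \<le> c \<and> c \<le> rc"
      show False by (rule RB_core[OF ab bc cpos u v d F]) (use h bnds ra in auto)
    next
      assume h: "rc \<le> c \<and> c \<le> rb"
      show False by (rule RB_core[where ra=ra and rb=rc and rc=rb, OF ab bc cpos _ _ _ F]) (use h bnds ra u v d in \<open>auto simp: algebra_simps\<close>)
    qed
  qed
  show ?thesis
  proof (cases "c > 0")
    case True thus ?thesis using main[OF ab bc True u v d F] by simp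
  next
    case False
    hence "-c > 0" using cnz by simp
    moreover have "b \<ge> \<bar>-c\<bar>" using bc by simp
    ultimately have "\<bar>-ra\<bar> \<ge> -c" using main[OF ab _ _ _ _ _ FF_neg[OF F], of "-ra" "-rb" "-rc"] u v d by auto
    thus ?thesis using False by simp
  qed
qed

definition WR :: "real \<Rightarrow> real \<Rightarrow> real \<Rightarrow> real \<Rightarrow> real \<Rightarrow> bool" where
  "WR a b ra rb rc \<longleftrightarrow> \<bar>ra\<bar> \<le> a \<and> \<bar>rb\<bar> \<le> a \<and> \<bar>rc\<bar> \<le> a \<and> \<bar>ra*rb\<bar> \<le> a*b \<and> \<bar>ra*rc\<bar> \<le> a*b \<and> \<bar>rb*rc\<bar> \<le> a*b"

lemma pair_from_third:
  fixes a b c x y z :: real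
  assumes d: "\<bar>x*y*z\<bar> = a*b*\<bar>c\<bar>" and z: "\<bar>z\<bar> \<ge> \<bar>c\<bar>" and c: "c \<noteq> 0" and ab: "a*b \<ge> 0"
  shows "\<bar>x*y\<bar> \<le> a*b"
proof -
  have zp: "\<bar>z\<bar> > 0" using z c by linarith
  have "\<bar>x*y\<bar>*\<bar>z\<bar> = a*b*\<bar>c\<bar>" using d by (simp add: abs_mult)
  also have "\<dots> \<le> a*b*\<bar>z\<bar>" using z ab by (simp add: mult_left_mono)
  finally show ?thesis using zp by simp
qed

lemma third_from_pair:
  fixes a b c x y z :: real
  assumes d: "\<bar>x*y*z\<bar> = a*b*\<bar>c\<bar>" and p: "\<bar>x*y\<bar> \<le> a*b" and ab: "a*b > 0"
  shows "\<bar>z\<bar> \<ge> \<bar>c\<bar>"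
proof (rule ccontr)
  assume "\<not> ?thesis" hence zc: "\<bar>z\<bar> < \<bar>c\<bar>" by simp
  have "\<bar>x*y\<bar>*\<bar>z\<bar> \<le> a*b*\<bar>z\<bar>" using p by (simp add: mult_right_mono)
  also have "\<dots> < a*b*\<bar>c\<bar>" by (rule mult_strict_left_mono[OF zc ab])
  finally show False using d by (simp add: abs_mult)
qed

lemma real_FF_imp_W:
  fixes a b c ra rb rc u v :: real
  assumes ab: "a \<ge> b" and bc: "b \<ge> \<bar>c\<bar>"
    and u: "u = ra+rb+rc" and v: "v = ra*rb+ra*rc+rb*rc" and d: "ra*rb*rc = a*b*c"
    and F: "FF a b c u v"
  shows "WR a b ra rb rc"
proof -
  note bnd = real_bounds[OF ab bc u v d F]
  have abn: "a*b \<ge> 0" using ab bc by simp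
  have da: "\<bar>ra*rb*rc\<bar> = a*b*\<bar>c\<bar>" using d ab bc by (simp add: abs_mult)
  have pairs: "\<bar>ra*rb\<bar> \<le> a*b \<and> \<bar>ra*rc\<bar> \<le> a*b \<and> \<bar>rb*rc\<bar> \<le> a*b"
  proof (cases "c = 0")
    case False
    have "\<bar>ra\<bar> \<ge> \<bar>c\<bar>" by (rule RB[OF ab bc False u v d F])
    moreover have "\<bar>rb\<bar> \<ge> \<bar>c\<bar>" by (rule RB[where ra=rb and rb=ra and rc=rc, OF ab bc False _ _ _ F]) (use u v d in \<open>simp_all add: ac_simps\<close>)
    moreover have "\<bar>rc\<bar> \<ge> \<bar>c\<bar>" by (rule RB[where ra=rc and rb=ra and rc=rb, OF ab bc False _ _ _ F]) (use u v d in \<open>simp_all add: ac_simps\<close>)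
    moreover have "\<bar>ra*rc*rb\<bar> = a*b*\<bar>c\<bar>" "\<bar>rb*rc*ra\<bar> = a*b*\<bar>c\<bar>" using da by (simp_all add: ac_simps)
    ultimately show ?thesis using pair_from_third[OF da _ False abn] pair_from_third[OF _ _ False abn] by blast
  next
    case True
    hence F3: "v \<le> a*b" and F4: "-(a*b) \<le> v" using F unfolding FF_def by auto
    have "ra = 0 \<or> rb = 0 \<or> rc = 0" using d True by simp
    thus ?thesis using F3 F4 abn v by auto
  qed
  show ?thesis unfolding WR_def using bnd pairs by auto
qed

lemma neg_of_prod: "(P::real) > 0 \<Longrightarrow> X * P \<le> 0 \<Longrightarrow> X \<le> 0"
  by (auto simp: mult_le_0_iff)

lemma pos_of_prod: "(P::real) > 0 \<Longrightarrow> X * P \<ge> 0 \<Longrightarrow> X \<ge> 0"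
  by (auto simp: zero_le_mult_iff)

lemma prod3_nonpos: "(x::real) \<le> 0 \<Longrightarrow> y \<le> 0 \<Longrightarrow> z \<le> 0 \<Longrightarrow> x*y*z \<le> 0"
  by (simp add: mult_nonneg_nonpos zero_le_mult_iff)

lemma real_W_imp_FF:
  fixes a b c ra rb rc u v :: real
  assumes ab: "a \<ge> b" and bc: "b \<ge> \<bar>c\<bar>"
    and u: "u = ra+rb+rc" and v: "v = ra*rb+ra*rc+rb*rc" and d: "ra*rb*rc = a*b*c"
    and W: "WR a b ra rb rc"
  shows "FF a b c u v"
proof -
  note E = Fe_real[OF u v d]
  have bnd: "\<bar>ra\<bar> \<le> a" "\<bar>rb\<bar> \<le> a" "\<bar>rc\<bar> \<le> a" and pr: "\<bar>ra*rb\<bar> \<le> a*b" "\<bar>ra*rc\<bar> \<le> a*b" "\<bar>rb*rc\<bar> \<le> a*b"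
    using W unfolding WR_def by auto
  show ?thesis
  proof (cases "a = 0")
    case True
    hence "ra = 0" "rb = 0" "rc = 0" "b = 0" "c = 0" using bnd ab bc by auto
    thus ?thesis using True u v unfolding FF_def by simp
  next
    case False
    hence apos: "a > 0" using ab bc by linarith
    have "a*(a^2 - a*u + v - b*c) \<ge> 0" unfolding E(1) using bnd by (intro mult_nonneg_nonneg) auto
    hence F1: "0 \<le> a^2 - a*u + v - b*c" using apos by (simp add: zero_le_mult_iff)
    have "a*(a^2 + a*u + v + b*c) \<ge> 0" unfolding E(2) using bnd by (intro mult_nonneg_nonneg) auto
    hence F2: "0 \<le> a^2 + a*u + v + b*c" using apos by (simp add: zero_le_mult_iff)
    have F34: "c^2 - c*u + v - a*b \<le> 0 \<and> 0 \<le> c^2 + c*u + v + a*b"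
    proof (cases "c = 0")
      case True
      have "ra = 0 \<or> rb = 0 \<or> rc = 0" using d True by simp
      hence "\<bar>v\<bar> \<le> a*b" using v pr by auto
      thus ?thesis using True by auto
    next
      case False
      have abp: "a*b > 0" using False ab bc by (simp add: mult_pos_pos)
      have da: "\<bar>ra*rb*rc\<bar> = a*b*\<bar>c\<bar>" using d ab bc by (simp add: abs_mult)
      have "\<bar>rc\<bar> \<ge> \<bar>c\<bar>" by (rule third_from_pair[OF da pr(1) abp])
      moreover have "\<bar>rb\<bar> \<ge> \<bar>c\<bar>" by (rule third_from_pair[of ra rc rb a b c]) (use da pr abp in \<open>simp_all add: ac_simps\<close>)
      moreover have "\<bar>ra\<bar> \<ge> \<bar>c\<bar>" by (rule third_from_pair[of rb rc ra a b c]) (use da pr abp in \<open>simp_all add: ac_simps\<close>)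
      ultimately have ge: "\<bar>ra\<bar> \<ge> \<bar>c\<bar>" "\<bar>rb\<bar> \<ge> \<bar>c\<bar>" "\<bar>rc\<bar> \<ge> \<bar>c\<bar>" by auto
      have s1: "(c - r)*r \<le> 0" if "\<bar>r\<bar> \<ge> \<bar>c\<bar>" for r :: real
      proof -
        have "c*r \<le> \<bar>c\<bar>*\<bar>r\<bar>" by (metis abs_ge_self abs_mult)
        also have "\<dots> \<le> \<bar>r\<bar>*\<bar>r\<bar>" by (rule mult_right_mono) (use that in auto)
        also have "\<dots> = r*r" by (simp add: abs_mult[symmetric])
        finally show ?thesis by (simp add: algebra_simps)
      qed
      have s2: "(c + r)*r \<ge> 0" if "\<bar>r\<bar> \<ge> \<bar>c\<bar>" for r :: real
      proof -
        have "-(c*r) \<le> \<bar>c\<bar>*\<bar>r\<bar>" by (metis abs_ge_minus_self abs_mult)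
        also have "\<dots> \<le> \<bar>r\<bar>*\<bar>r\<bar>" by (rule mult_right_mono) (use that in auto)
        also have "\<dots> = r*r" by (simp add: abs_mult[symmetric])
        finally show ?thesis by (simp add: algebra_simps)
      qed
      have "((c-ra)*ra)*((c-rb)*rb)*((c-rc)*rc) \<le> 0" by (rule prod3_nonpos[OF s1[OF ge(1)] s1[OF ge(2)] s1[OF ge(3)]])
      hence "(c*(c^2 - c*u + v - a*b))*(ra*rb*rc) \<le> 0" unfolding E(3) by (simp add: ac_simps)
      hence "(c^2 - c*u + v - a*b)*(a*b*(c*c)) \<le> 0" unfolding d by (simp add: ac_simps)
      moreover have cc: "c*c > 0" using False not_real_square_gt_zero by blast
      moreover have "a*b*(c*c) > 0" using abp cc by (rule mult_pos_pos)
      ultimately have F3: "c^2 - c*u + v - a*b \<le> 0" using neg_of_prod by blast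
      have "((c+ra)*ra)*((c+rb)*rb) \<ge> 0" by (rule mult_nonneg_nonneg[OF s2[OF ge(1)] s2[OF ge(2)]])
      hence "((c+ra)*ra)*((c+rb)*rb)*((c+rc)*rc) \<ge> 0" by (rule mult_nonneg_nonneg[OF _ s2[OF ge(3)]])
      hence "(c*(c^2 + c*u + v + a*b))*(ra*rb*rc) \<ge> 0" unfolding E(4) by (simp add: ac_simps)
      hence "(c^2 + c*u + v + a*b)*(a*b*(c*c)) \<ge> 0" unfolding d by (simp add: ac_simps)
      moreover have "a*b*(c*c) > 0" using abp cc by (rule mult_pos_pos)
      ultimately have F4: "0 \<le> c^2 + c*u + v + a*b" using pos_of_prod by blast
      show ?thesis using F3 F4 by simp
    qed
    have U: "\<bar>u\<bar> \<le> 3*a" using u bnd by linarith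
    show ?thesis using FF5[OF ab bc F1 F2 _ _ U] F34 by simp
  qed
qed

definition WC :: "real \<Rightarrow> real \<Rightarrow> real \<Rightarrow> real \<Rightarrow> real \<Rightarrow> bool" where
  "WC a b x y r \<longleftrightarrow> x^2+y^2 \<le> a^2 \<and> \<bar>r\<bar> \<le> a \<and> x^2+y^2 \<le> a*b \<and> (x^2+y^2)*r^2 \<le> (a*b)^2"

lemma gpos: "(y::real) \<noteq> 0 \<Longrightarrow> (t - x)^2 + y^2 > 0"
  by (simp add: add_nonneg_pos)

lemma gpos2: "(y::real) \<noteq> 0 \<Longrightarrow> (t + x)^2 + y^2 > 0"
  by (simp add: add_nonneg_pos)

lemma cplx_FF_imp_W:
  fixes a b c x y r u v :: real
  assumes ab: "a \<ge> b" and bc: "b \<ge> \<bar>c\<bar>" and y: "y \<noteq> 0"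
    and u: "u = 2*x + r" and v: "v = x^2 + y^2 + 2*x*r" and d: "(x^2+y^2)*r = a*b*c"
    and F: "FF a b c u v"
  shows "WC a b x y r"
proof -
  note E = Fe_cplx[OF u v d]
  have r2p: "x^2+y^2 > 0" using y by (simp add: add_nonneg_pos)
  have F1: "0 \<le> a^2 - a*u + v - b*c" and F2: "0 \<le> a^2 + a*u + v + b*c" and F3: "c^2 - c*u + v - a*b \<le> 0"
    using F unfolding FF_def by auto
  have apos: "a > 0"
  proof (rule ccontr)
    assume "\<not> a > 0" hence z: "a = 0" "b = 0" "c = 0" using ab bc by auto
    hence "(x^2+y^2)*r = 0" using d by simp
    hence "r = 0" using r2p by (metis mult_eq_0_iff less_irrefl)
    moreover have "v = 0" using F1 F3 z by simp
    ultimately show False using v r2p by simp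
  qed
  have "(a-r)*((a-x)^2+y^2) \<ge> 0" unfolding E(1)[symmetric] using apos F1 by simp
  hence r1: "a - r \<ge> 0" using pos_of_prod[OF gpos[OF y]] by blast
  have "(a+r)*((a+x)^2+y^2) \<ge> 0" unfolding E(2)[symmetric] using apos F2 by simp
  hence r2: "a + r \<ge> 0" using pos_of_prod[OF gpos2[OF y]] by blast
  have ra: "\<bar>r\<bar> \<le> a" using r1 r2 by linarith
  have abn: "a*b \<ge> 0" using ab bc by simp
  have main: "x^2+y^2 \<le> a*b \<and> (x^2+y^2)*r^2 \<le> (a*b)^2"
  proof (cases "c = 0")
    case True
    hence "(x^2+y^2)*r = 0" using d by simp
    hence "r = 0" using r2p by (metis mult_eq_0_iff less_irrefl)
    thus ?thesis using F3 True v abn by simp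
  next
    case False
    have "c*((c-r)*((c-x)^2+y^2)) = (c*c)*(c^2 - c*u + v - a*b)" unfolding E(3)[symmetric] by (simp add: algebra_simps)
    also have "\<dots> \<le> 0" using F3 by (intro mult_nonneg_nonpos) auto
    finally have "(c*(c-r))*((c-x)^2+y^2) \<le> 0" by (simp add: mult.assoc)
    hence "c*(c-r) \<le> 0" using neg_of_prod[OF gpos[OF y]] by blast
    hence cr: "c*r \<ge> c*c" by (simp add: algebra_simps)
    have "\<bar>c\<bar>*\<bar>c\<bar> = c*c" by (simp add: abs_mult[symmetric])
    also have "\<dots> \<le> c*r" using cr .
    also have "\<dots> \<le> \<bar>c\<bar>*\<bar>r\<bar>" by (simp add: abs_mult[symmetric])
    finally have h: "\<bar>c\<bar>*\<bar>c\<bar> \<le> \<bar>c\<bar>*\<bar>r\<bar>" .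
    have cp: "\<bar>c\<bar> > 0" using False by simp
    have rc: "\<bar>c\<bar> \<le> \<bar>r\<bar>" using h mult_le_cancel_left_pos[OF cp] by blast
    have "\<bar>(x^2+y^2)*r\<bar> = \<bar>a*b*c\<bar>" using d by simp
    hence dd: "(x^2+y^2)*\<bar>r\<bar> = a*b*\<bar>c\<bar>" using r2p abn ab bc by (simp add: abs_mult abs_of_nonneg)
    have "(x^2+y^2)*\<bar>r\<bar> \<le> a*b*\<bar>r\<bar>" unfolding dd using rc abn by (simp add: mult_left_mono)
    moreover have "\<bar>r\<bar> > 0" using rc False by linarith
    ultimately have q1: "x^2+y^2 \<le> a*b" by simp
    have "r^2 = \<bar>r\<bar>*\<bar>r\<bar>" by (simp add: power2_eq_square)
    hence "(x^2+y^2)*r^2 = ((x^2+y^2)*\<bar>r\<bar>)*\<bar>r\<bar>" by (simp add: mult.assoc)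
    hence "(x^2+y^2)*r^2 = (a*b*\<bar>c\<bar>)*\<bar>r\<bar>" unfolding dd .
    also have "\<dots> \<le> (a*b*b)*a" using bc ra abn ab by (intro mult_mono mult_left_mono) auto
    also have "\<dots> = (a*b)^2" by (simp add: power2_eq_square)
    finally show ?thesis using q1 by simp
  qed
  have "a*b \<le> a^2" using ab apos by (simp add: power2_eq_square)
  thus ?thesis unfolding WC_def using main ra by simp
qed

lemma pos_of_prod2: "(P::real) > 0 \<Longrightarrow> P * X \<ge> 0 \<Longrightarrow> X \<ge> 0"
  by (auto simp: zero_le_mult_iff)

lemma cplx_W_imp_FF:
  fixes a b c x y r u v :: real
  assumes ab: "a \<ge> b" and bc: "b \<ge> \<bar>c\<bar>" and y: "y \<noteq> 0"
    and u: "u = 2*x + r" and v: "v = x^2 + y^2 + 2*x*r" and d: "(x^2+y^2)*r = a*b*c"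
    and W: "WC a b x y r"
  shows "FF a b c u v"
proof -
  note E = Fe_cplx[OF u v d]
  have r2p: "x^2+y^2 > 0" using y by (simp add: add_nonneg_pos)
  have w1: "x^2+y^2 \<le> a^2" and ra: "\<bar>r\<bar> \<le> a" and w3: "x^2+y^2 \<le> a*b" and w4: "(x^2+y^2)*r^2 \<le> (a*b)^2"
    using W unfolding WC_def by auto
  have an: "a \<ge> 0" "b \<ge> 0" using ab bc by auto
  have apos: "a > 0"
  proof (rule ccontr)
    assume "\<not> a > 0" hence "a = 0" using an by simp
    thus False using w1 r2p by simp
  qed
  have "a*(a^2 - a*u + v - b*c) \<ge> 0" unfolding E(1) using ra gpos[OF y, of a] by (intro mult_nonneg_nonneg) auto
  hence F1: "0 \<le> a^2 - a*u + v - b*c" by (rule pos_of_prod2[OF apos])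
  have "a*(a^2 + a*u + v + b*c) \<ge> 0" unfolding E(2) using ra gpos2[OF y, of a] by (intro mult_nonneg_nonneg) auto
  hence F2: "0 \<le> a^2 + a*u + v + b*c" by (rule pos_of_prod2[OF apos])
  have F34: "c^2 - c*u + v - a*b \<le> 0 \<and> 0 \<le> c^2 + c*u + v + a*b"
  proof (cases "c = 0")
    case True
    hence "(x^2+y^2)*r = 0" using d by simp
    hence "r = 0" using r2p by (metis mult_eq_0_iff less_irrefl)
    thus ?thesis using True v w3 an by simp
  next
    case False
    have abp: "a*b > 0" using False ab bc by simp
    have cc: "c*c > 0" using False not_real_square_gt_zero by blast
    have "(x^2+y^2)*(c*r) = c*((x^2+y^2)*r)" by (simp add: algebra_simps)
    also have "\<dots> = c*(a*b*c)" using d by simp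
    also have "\<dots> = a*b*(c*c)" by (simp add: algebra_simps)
    finally have h1: "(x^2+y^2)*(c*r) = a*b*(c*c)" .
    have "a*b*(c*c) > 0" using abp cc by (rule mult_pos_pos)
    hence "(x^2+y^2)*(c*r) > 0" unfolding h1 .
    hence crp: "c*r > 0" using r2p by (auto simp only: zero_less_mult_iff)
    have "\<bar>(x^2+y^2)*r\<bar> = \<bar>a*b*c\<bar>" using d by simp
    hence dd: "(x^2+y^2)*\<bar>r\<bar> = a*b*\<bar>c\<bar>" using r2p an by (simp add: abs_mult abs_of_nonneg)
    have "a*b*\<bar>c\<bar> \<le> a*b*\<bar>r\<bar>" unfolding dd[symmetric] using w3 by (simp add: mult_right_mono)
    hence rc: "\<bar>c\<bar> \<le> \<bar>r\<bar>" using mult_le_cancel_left_pos[OF abp] by blast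
    have "c*c = \<bar>c\<bar>*\<bar>c\<bar>" by (simp add: abs_mult[symmetric])
    also have "\<dots> \<le> \<bar>c\<bar>*\<bar>r\<bar>" by (rule mult_left_mono[OF rc]) simp
    also have "\<dots> = c*r" using crp by (simp add: abs_mult[symmetric])
    finally have ccr: "c*c \<le> c*r" .
    have "(c*c)*(c^2 - c*u + v - a*b) = c*(c*(c^2 - c*u + v - a*b))" by (simp add: mult.assoc)
    also have "\<dots> = c*((c-r)*((c-x)^2+y^2))" using E(3) by simp
    also have "\<dots> = (c*(c-r))*((c-x)^2+y^2)" by (simp add: mult.assoc)
    also have "\<dots> \<le> 0"
    proof -
      have "c*(c-r) \<le> 0" using ccr by (simp add: algebra_simps)
      thus ?thesis by (rule mult_nonpos_nonneg) (rule less_imp_le[OF gpos[OF y]])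
    qed
    finally have "(c^2 - c*u + v - a*b)*(c*c) \<le> 0" by (simp add: mult.commute)
    hence F3: "c^2 - c*u + v - a*b \<le> 0" using neg_of_prod[OF cc] by blast
    have "(c*c)*(c^2 + c*u + v + a*b) = c*(c*(c^2 + c*u + v + a*b))" by (simp add: mult.assoc)
    also have "\<dots> = c*((c+r)*((c+x)^2+y^2))" using E(4) by simp
    also have "\<dots> = (c*(c+r))*((c+x)^2+y^2)" by (simp add: mult.assoc)
    also have "\<dots> \<ge> 0"
    proof -
      have "c*(c+r) \<ge> 0" using cc crp by (simp add: algebra_simps)
      thus ?thesis by (rule mult_nonneg_nonneg) (rule less_imp_le[OF gpos2[OF y]])
    qed
    finally have "(c^2 + c*u + v + a*b)*(c*c) \<ge> 0" by (simp add: mult.commute)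
    hence F4: "0 \<le> c^2 + c*u + v + a*b" using pos_of_prod[OF cc] by blast
    show ?thesis using F3 F4 by simp
  qed
  have "x^2 \<le> a^2" using w1 zero_le_power2[of y] by linarith
  hence "\<bar>x\<bar> \<le> \<bar>a\<bar>" by (simp add: abs_le_square_iff)
  hence U: "\<bar>u\<bar> \<le> 3*a" using u ra an by linarith
  show ?thesis using FF5[OF ab bc F1 F2 _ _ U] F34 by simp
qed

definition mx3 :: "real \<Rightarrow> real \<Rightarrow> real \<Rightarrow> real" where "mx3 x y z = max x (max y z)"

lemma perm3_cases:
  assumes "\<sigma> permutes {0::nat,1,2}"
  shows "(\<sigma> 0 = 0 \<and> \<sigma> 1 = 1 \<and> \<sigma> 2 = 2) \<or> (\<sigma> 0 = 0 \<and> \<sigma> 1 = 2 \<and> \<sigma> 2 = 1) \<or>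
         (\<sigma> 0 = 1 \<and> \<sigma> 1 = 0 \<and> \<sigma> 2 = 2) \<or> (\<sigma> 0 = 1 \<and> \<sigma> 1 = 2 \<and> \<sigma> 2 = 0) \<or>
         (\<sigma> 0 = 2 \<and> \<sigma> 1 = 0 \<and> \<sigma> 2 = 1) \<or> (\<sigma> 0 = 2 \<and> \<sigma> 1 = 1 \<and> \<sigma> 2 = 0)"
proof -
  have im: "\<sigma> 0 \<le> 2" "\<sigma> 1 \<le> 2" "\<sigma> 2 \<le> 2" 
    using permutes_in_image[OF assms, of 0] permutes_in_image[OF assms, of 1] permutes_in_image[OF assms, of 2] by auto
  have "inj \<sigma>" using permutes_inj[OF assms] .
  hence "\<sigma> 0 \<noteq> \<sigma> 1" "\<sigma> 0 \<noteq> \<sigma> 2" "\<sigma> 1 \<noteq> \<sigma> 2" by (simp_all add: inj_eq)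
  thus ?thesis using im by presburger
qed

lemma top2_max: "(x::real) \<ge> y \<Longrightarrow> y \<ge> z \<Longrightarrow> z \<ge> 0 \<Longrightarrow> mx3 (x*y) (x*z) (y*z) = x*y"
proof -
  assume h: "x \<ge> y" "y \<ge> z" "z \<ge> 0"
  have "x*z \<le> x*y" using h by (intro mult_left_mono) auto
  moreover have "z*y \<le> x*y" using h by (intro mult_right_mono) auto
  hence "y*z \<le> x*y" by (simp add: mult.commute)
  ultimately show ?thesis unfolding mx3_def by simp
qed

lemma desc_max:
  fixes f :: "nat \<Rightarrow> real"
  assumes d: "desc_reordering f \<sigma>" and nn: "\<And>i. f i \<ge> 0"
  shows "f (\<sigma> 0) = mx3 (f 0) (f 1) (f 2) \<and> f (\<sigma> 0) * f (\<sigma> 1) = mx3 (f 0 * f 1) (f 0 * f 2) (f 1 * f 2)"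
proof -
  have p: "\<sigma> permutes {0,1,2}" and s: "f (\<sigma> 0) \<ge> f (\<sigma> 1)" "f (\<sigma> 1) \<ge> f (\<sigma> 2)" using d unfolding desc_reordering_def by auto
  have n2: "f (\<sigma> 2) \<ge> 0" by (rule nn)
  have T: "mx3 (f (\<sigma> 0) * f (\<sigma> 1)) (f (\<sigma> 0) * f (\<sigma> 2)) (f (\<sigma> 1) * f (\<sigma> 2)) = f (\<sigma> 0) * f (\<sigma> 1)"
    by (rule top2_max[OF s n2])
  have T2: "mx3 (f (\<sigma> 0)) (f (\<sigma> 1)) (f (\<sigma> 2)) = f (\<sigma> 0)" using s unfolding mx3_def by simp
  from perm3_cases[OF p] show ?thesis
  proof (elim disjE conjE)
  qed (use T T2 in \<open>simp_all add: mx3_def ac_simps\<close>)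
qed

lemma desc_exists:
  fixes f :: "nat \<Rightarrow> real"
  shows "\<exists>\<sigma>. desc_reordering f \<sigma>"
proof -
  have P: "transpose (0::nat) 1 permutes {0,1,2}" "transpose (1::nat) 2 permutes {0,1,2}" "transpose (0::nat) 2 permutes {0,1,2}"
    by (auto intro: permutes_swap_id)
  have P2: "transpose (0::nat) 1 \<circ> transpose 1 2 permutes {0,1,2}" "transpose (1::nat) 2 \<circ> transpose 0 1 permutes {0,1,2}"
    using P by (auto intro: permutes_compose)
  consider "f 0 \<ge> f 1 \<and> f 1 \<ge> f 2" | "f 0 \<ge> f 2 \<and> f 2 \<ge> f 1" | "f 1 \<ge> f 0 \<and> f 0 \<ge> f 2"
    | "f 1 \<ge> f 2 \<and> f 2 \<ge> f 0" | "f 2 \<ge> f 0 \<and> f 0 \<ge> f 1" | "f 2 \<ge> f 1 \<and> f 1 \<ge> f 0" by linarith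
  thus ?thesis
  proof cases
    case 1 thus ?thesis unfolding desc_reordering_def by (intro exI[of _ id]) auto
  next
    case 2 thus ?thesis unfolding desc_reordering_def using P by (intro exI[of _ "transpose 1 2"]) auto
  next
    case 3 thus ?thesis unfolding desc_reordering_def using P by (intro exI[of _ "transpose 0 1"]) auto
  next
    case 4 thus ?thesis unfolding desc_reordering_def using P2 by (intro exI[of _ "transpose 0 1 \<circ> transpose 1 2"]) auto
  next
    case 5 thus ?thesis unfolding desc_reordering_def using P2 by (intro exI[of _ "transpose 1 2 \<circ> transpose 0 1"]) auto
  next
    case 6 thus ?thesis unfolding desc_reordering_def using P by (intro exI[of _ "transpose 0 2"]) auto
  qed
qed

lemma weyl_stmt:
  fixes l :: "nat \<Rightarrow> complex" and s :: "nat \<Rightarrow> real"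
  shows "(\<forall>\<sigma> \<tau>. desc_reordering (\<lambda>i. \<bar>s i\<bar>) \<sigma> \<and> desc_reordering (\<lambda>i. cmod (l i)) \<tau> \<longrightarrow>
            \<bar>s (\<sigma> 0) * s (\<sigma> 1)\<bar> \<ge> cmod (l (\<tau> 0) * l (\<tau> 1))
          \<and> \<bar>s (\<sigma> 0)\<bar> \<ge> cmod (l (\<tau> 0)))
    \<longleftrightarrow> (mx3 (cmod (l 0)) (cmod (l 1)) (cmod (l 2)) \<le> mx3 (\<bar>s 0\<bar>) (\<bar>s 1\<bar>) (\<bar>s 2\<bar>) \<and>
         mx3 (cmod (l 0)*cmod (l 1)) (cmod (l 0)*cmod (l 2)) (cmod (l 1)*cmod (l 2))
           \<le> mx3 (\<bar>s 0\<bar>*\<bar>s 1\<bar>) (\<bar>s 0\<bar>*\<bar>s 2\<bar>) (\<bar>s 1\<bar>*\<bar>s 2\<bar>))" (is "?L \<longleftrightarrow> ?R")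
proof -
  have A: "\<bar>s (\<sigma> 0)\<bar> = mx3 (\<bar>s 0\<bar>) (\<bar>s 1\<bar>) (\<bar>s 2\<bar>) \<and> \<bar>s (\<sigma> 0) * s (\<sigma> 1)\<bar> = mx3 (\<bar>s 0\<bar>*\<bar>s 1\<bar>) (\<bar>s 0\<bar>*\<bar>s 2\<bar>) (\<bar>s 1\<bar>*\<bar>s 2\<bar>)"
    if "desc_reordering (\<lambda>i. \<bar>s i\<bar>) \<sigma>" for \<sigma>
  proof -
    have h: "\<bar>s (\<sigma> 0)\<bar> = mx3 (\<bar>s 0\<bar>) (\<bar>s 1\<bar>) (\<bar>s 2\<bar>)"
      "\<bar>s (\<sigma> 0)\<bar> * \<bar>s (\<sigma> 1)\<bar> = mx3 (\<bar>s 0\<bar>*\<bar>s 1\<bar>) (\<bar>s 0\<bar>*\<bar>s 2\<bar>) (\<bar>s 1\<bar>*\<bar>s 2\<bar>)"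
      using desc_max[OF that] by auto
    have "\<bar>s (\<sigma> 0) * s (\<sigma> 1)\<bar> = mx3 (\<bar>s 0\<bar>*\<bar>s 1\<bar>) (\<bar>s 0\<bar>*\<bar>s 2\<bar>) (\<bar>s 1\<bar>*\<bar>s 2\<bar>)"
      using h(2) by (simp only: abs_mult)
    thus ?thesis using h(1) by simp
  qed
  have B: "cmod (l (\<tau> 0)) = mx3 (cmod (l 0)) (cmod (l 1)) (cmod (l 2)) \<and> cmod (l (\<tau> 0) * l (\<tau> 1)) = mx3 (cmod (l 0)*cmod (l 1)) (cmod (l 0)*cmod (l 2)) (cmod (l 1)*cmod (l 2))"
    if "desc_reordering (\<lambda>i. cmod (l i)) \<tau>" for \<tau>
  proof -
    have h: "cmod (l (\<tau> 0)) = mx3 (cmod (l 0)) (cmod (l 1)) (cmod (l 2))"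
      "cmod (l (\<tau> 0)) * cmod (l (\<tau> 1)) = mx3 (cmod (l 0)*cmod (l 1)) (cmod (l 0)*cmod (l 2)) (cmod (l 1)*cmod (l 2))"
      using desc_max[OF that] by auto
    have "cmod (l (\<tau> 0) * l (\<tau> 1)) = mx3 (cmod (l 0)*cmod (l 1)) (cmod (l 0)*cmod (l 2)) (cmod (l 1)*cmod (l 2))"
      using h(2) by (simp only: norm_mult)
    thus ?thesis using h(1) by simp
  qed
  obtain \<sigma>0 where s0: "desc_reordering (\<lambda>i. \<bar>s i\<bar>) \<sigma>0" using desc_exists by blast
  obtain \<tau>0 where t0: "desc_reordering (\<lambda>i. cmod (l i)) \<tau>0" using desc_exists by blast
  show ?thesis
  proof
    assume h: ?L
    from h[rule_format, OF conjI[OF s0 t0]] A[OF s0] B[OF t0] show ?R by auto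
  next
    assume ?R thus ?L using A B by auto
  qed
qed

lemma mx3_le_iff: "mx3 x y z \<le> t \<longleftrightarrow> x \<le> t \<and> y \<le> t \<and> z \<le> t"
  unfolding mx3_def by simp

lemma cnj_real_iff: "cnj z = z \<longleftrightarrow> Im z = 0"
  by (simp add: complex_eq_iff)

lemma cnj_root:
  fixes l0 l1 l2 w :: complex
  assumes e1: "Im (l0+l1+l2) = 0" and e2: "Im (l0*l1+l0*l2+l1*l2) = 0" and e3: "Im (l0*l1*l2) = 0"
  shows "(cnj w - l0)*(cnj w - l1)*(cnj w - l2) = cnj ((w - l0)*(w - l1)*(w - l2))"
proof -
  define E1 where "E1 = l0+l1+l2"
  define E2 where "E2 = l0*l1+l0*l2+l1*l2"
  define E3 where "E3 = l0*l1*l2"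
  have c: "cnj E1 = E1" "cnj E2 = E2" "cnj E3 = E3" using e1 e2 e3 unfolding E1_def E2_def E3_def cnj_real_iff by auto
  have "(cnj w - l0)*(cnj w - l1)*(cnj w - l2) = cnj w^3 - E1 * cnj w^2 + E2 * cnj w - E3"
    unfolding E1_def E2_def E3_def by (simp add: algebra_simps power2_eq_square power3_eq_cube)
  also have "\<dots> = cnj (w^3 - cnj E1 * w^2 + cnj E2 * w - cnj E3)" by simp
  also have "\<dots> = cnj (w^3 - E1 * w^2 + E2 * w - E3)" using c by simp
  also have "w^3 - E1 * w^2 + E2 * w - E3 = (w - l0)*(w - l1)*(w - l2)"
    unfolding E1_def E2_def E3_def by (simp add: algebra_simps power2_eq_square power3_eq_cube)
  finally show ?thesis .
qed

definition NF :: "complex \<Rightarrow> complex \<Rightarrow> complex \<Rightarrow> bool" where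
  "NF l0 l1 l2 \<longleftrightarrow> (Im l0 = 0 \<and> Im l1 = 0 \<and> Im l2 = 0) \<or> (l1 = cnj l0 \<and> Im l2 = 0)
     \<or> (l2 = cnj l0 \<and> Im l1 = 0) \<or> (l2 = cnj l1 \<and> Im l0 = 0)"

lemma es_real_NF:
  fixes l0 l1 l2 :: complex
  assumes e1: "Im (l0+l1+l2) = 0" and e2: "Im (l0*l1+l0*l2+l1*l2) = 0" and e3: "Im (l0*l1*l2) = 0"
  shows "NF l0 l1 l2"
proof -
  note R = cnj_root[OF e1 e2 e3]
  show ?thesis
  proof (cases "Im l0 = 0")
    case False
    have "(cnj l0 - l0)*(cnj l0 - l1)*(cnj l0 - l2) = 0" using R[of l0] by simp
    moreover have "cnj l0 - l0 \<noteq> 0" using False by (simp add: complex_eq_iff)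
    ultimately have "cnj l0 = l1 \<or> cnj l0 = l2" by simp
    thus ?thesis
    proof
      assume h: "cnj l0 = l1"
      have "Im l2 = 0" using e1 h by (simp add: complex_eq_iff)
      thus ?thesis unfolding NF_def using h by auto
    next
      assume h: "cnj l0 = l2"
      have "Im l1 = 0" using e1 h by (simp add: complex_eq_iff)
      thus ?thesis unfolding NF_def using h by auto
    qed
  next
    case T0: True
    show ?thesis
    proof (cases "Im l1 = 0")
      case True
      hence "Im l2 = 0" using e1 T0 by simp
      thus ?thesis unfolding NF_def using T0 True by auto
    next
      case False
      have "(cnj l1 - l0)*(cnj l1 - l1)*(cnj l1 - l2) = 0" using R[of l1] by simp
      moreover have "cnj l1 - l1 \<noteq> 0" using False by (simp add: complex_eq_iff)
      moreover have "cnj l1 \<noteq> l0" using False T0 by (auto simp: complex_eq_iff)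
      ultimately have "cnj l1 = l2" by simp
      thus ?thesis unfolding NF_def using T0 by auto
    qed
  qed
qed

lemma NF_es_real:
  assumes "NF l0 l1 l2"
  shows "Im (l0+l1+l2) = 0 \<and> Im (l0*l1+l0*l2+l1*l2) = 0 \<and> Im (l0*l1*l2) = 0"
  using assms unfolding NF_def by (auto simp: algebra_simps)

lemma mset_imp_es_real:
  fixes l0 l1 l2 :: complex
  assumes H: "image_mset cnj (mset [l0, l1, l2]) = mset [l0, l1, l2]"
  shows "Im (l0+l1+l2) = 0 \<and> Im (l0*l1+l0*l2+l1*l2) = 0 \<and> Im (l0*l1*l2) = 0"
proof -
  have s: "cnj l0 + cnj l1 + cnj l2 = l0 + l1 + l2" using arg_cong[OF H, of sum_mset] by (simp add: ac_simps)
  have p: "cnj l0 * cnj l1 * cnj l2 = l0 * l1 * l2" using arg_cong[OF H, of prod_mset] by (simp add: ac_simps)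
  have q: "(1 - cnj l0) * (1 - cnj l1) * (1 - cnj l2) = (1 - l0) * (1 - l1) * (1 - l2)"
    using arg_cong[OF H, of "\<lambda>M. prod_mset (image_mset (\<lambda>z. 1 - z) M)"] by (simp add: ac_simps)
  have i1: "Im (l0+l1+l2) = 0" using s by (simp add: complex_eq_iff)
  have "cnj (l0*l1*l2) = l0*l1*l2" using p by simp
  hence i3: "Im (l0*l1*l2) = 0" unfolding cnj_real_iff .
  have "cnj ((1 - l0) * (1 - l1) * (1 - l2)) = (1 - l0) * (1 - l1) * (1 - l2)" using q by simp
  hence i4: "Im ((1 - l0) * (1 - l1) * (1 - l2)) = 0" unfolding cnj_real_iff .
  have "(1 - l0) * (1 - l1) * (1 - l2) = 1 - (l0+l1+l2) + (l0*l1+l0*l2+l1*l2) - l0*l1*l2" by (simp add: algebra_simps)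
  hence "Im (l0*l1+l0*l2+l1*l2) = 0" using i1 i3 i4 by simp
  thus ?thesis using i1 i3 by simp
qed

lemma NF_imp_mset:
  assumes "NF l0 l1 l2"
  shows "image_mset cnj (mset [l0, l1, l2]) = mset [l0, l1, l2]"
proof -
  have r: "Im z = 0 \<Longrightarrow> cnj z = z" for z using cnj_real_iff by blast
  from assms show ?thesis unfolding NF_def
    by (elim disjE conjE) (simp_all add: r add_mset_commute)
qed

lemma real_core:
  fixes a b c u v :: real and l0 l1 l2 :: complex
  assumes ab: "a \<ge> b" and bc: "b \<ge> \<bar>c\<bar>"
    and re: "Im l0 = 0" "Im l1 = 0" "Im l2 = 0"
    and e1: "l0+l1+l2 = of_real u" and e2: "l0*l1+l0*l2+l1*l2 = of_real v" and e3: "l0*l1*l2 = of_real (a*b*c)"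
  shows "FF a b c u v \<longleftrightarrow> (cmod l0 \<le> a \<and> cmod l1 \<le> a \<and> cmod l2 \<le> a \<and>
      cmod l0 * cmod l1 \<le> a*b \<and> cmod l0 * cmod l2 \<le> a*b \<and> cmod l1 * cmod l2 \<le> a*b)"
proof -
  define ra where "ra = Re l0"
  define rb where "rb = Re l1"
  define rc where "rc = Re l2"
  have L: "l0 = of_real ra" "l1 = of_real rb" "l2 = of_real rc" using re unfolding ra_def rb_def rc_def
    by (auto simp: complex_eq_iff)
  have u: "u = ra+rb+rc" using arg_cong[OF e1, of Re] unfolding L by simp
  have v: "v = ra*rb+ra*rc+rb*rc" using arg_cong[OF e2, of Re] unfolding L by simp
  have d: "ra*rb*rc = a*b*c" using arg_cong[OF e3, of Re] unfolding L by simp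
  have "FF a b c u v \<longleftrightarrow> WR a b ra rb rc"
    using real_FF_imp_W[OF ab bc u v d] real_W_imp_FF[OF ab bc u v d] by blast
  also have "\<dots> \<longleftrightarrow> (cmod l0 \<le> a \<and> cmod l1 \<le> a \<and> cmod l2 \<le> a \<and>
      cmod l0 * cmod l1 \<le> a*b \<and> cmod l0 * cmod l2 \<le> a*b \<and> cmod l1 * cmod l2 \<le> a*b)"
    unfolding WR_def L by (simp add: abs_mult)
  finally show ?thesis .
qed

lemma pair_core:
  fixes a b c u v :: real and z w :: complex
  assumes ab: "a \<ge> b" and bc: "b \<ge> \<bar>c\<bar>" and y: "Im z \<noteq> 0"
    and re: "Im w = 0"
    and e1: "z + cnj z + w = of_real u" and e2: "z*cnj z + z*w + cnj z*w = of_real v" and e3: "z*cnj z*w = of_real (a*b*c)"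
  shows "FF a b c u v \<longleftrightarrow> (cmod z \<le> a \<and> cmod (cnj z) \<le> a \<and> cmod w \<le> a \<and>
      cmod z * cmod (cnj z) \<le> a*b \<and> cmod z * cmod w \<le> a*b \<and> cmod (cnj z) * cmod w \<le> a*b)"
proof -
  define x where "x = Re z"
  define yy where "yy = Im z"
  define r where "r = Re w"
  have Z: "z = Complex x yy" unfolding x_def yy_def by simp
  have Wr: "w = of_real r" using re unfolding r_def by (simp add: complex_eq_iff)
  have y': "yy \<noteq> 0" using y unfolding yy_def .
  have u: "u = 2*x + r" using arg_cong[OF e1, of Re] unfolding Z Wr by simp
  have v: "v = x^2 + yy^2 + 2*x*r" using arg_cong[OF e2, of Re] unfolding Z Wr by (simp add: power2_eq_square algebra_simps)
  have d: "(x^2+yy^2)*r = a*b*c" using arg_cong[OF e3, of Re] unfolding Z Wr by (simp add: power2_eq_square algebra_simps)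
  have an: "a \<ge> 0" "b \<ge> 0" using ab bc by auto
  have cz: "cmod z = sqrt (x^2+yy^2)" "cmod (cnj z) = sqrt (x^2+yy^2)" unfolding Z by (simp_all add: cmod_def)
  have cw: "cmod w = \<bar>r\<bar>" unfolding Wr by simp
  have sq: "sqrt (x^2+yy^2) * sqrt (x^2+yy^2) = x^2+yy^2" by simp
  have i1: "sqrt (x^2+yy^2) \<le> a \<longleftrightarrow> x^2+yy^2 \<le> a^2" using an sqrt_le_D real_le_lsqrt by blast
  have i2: "sqrt (x^2+yy^2) * \<bar>r\<bar> \<le> a*b \<longleftrightarrow> (x^2+yy^2)*r^2 \<le> (a*b)^2"
  proof -
    have "(sqrt (x^2+yy^2) * \<bar>r\<bar>)^2 \<le> (a*b)^2 \<longleftrightarrow> \<bar>sqrt (x^2+yy^2) * \<bar>r\<bar>\<bar> \<le> a*b"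
      by (rule power2_le_iff_abs_le) (use an in simp)
    hence "sqrt (x^2+yy^2) * \<bar>r\<bar> \<le> a*b \<longleftrightarrow> (sqrt (x^2+yy^2) * \<bar>r\<bar>)^2 \<le> (a*b)^2" by simp
    also have "(sqrt (x^2+yy^2) * \<bar>r\<bar>)^2 = (x^2+yy^2)*r^2" by (simp add: power_mult_distrib)
    finally show ?thesis .
  qed
  have "FF a b c u v \<longleftrightarrow> WC a b x yy r"
    using cplx_FF_imp_W[OF ab bc y' u v d] cplx_W_imp_FF[OF ab bc y' u v d] by blast
  also have "\<dots> \<longleftrightarrow> (cmod z \<le> a \<and> cmod (cnj z) \<le> a \<and> cmod w \<le> a \<and>
      cmod z * cmod (cnj z) \<le> a*b \<and> cmod z * cmod w \<le> a*b \<and> cmod (cnj z) * cmod w \<le> a*b)"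
    unfolding WC_def cz cw sq i1 i2 by (auto simp: mult.commute)
  finally show ?thesis .
qed

lemma core_sorted:
  fixes a b c u v :: real and l0 l1 l2 :: complex
  assumes ab: "a \<ge> b" and bc: "b \<ge> \<bar>c\<bar>" and N: "NF l0 l1 l2"
    and e1: "l0+l1+l2 = of_real u" and e2: "l0*l1+l0*l2+l1*l2 = of_real v" and e3: "l0*l1*l2 = of_real (a*b*c)"
  shows "RZ a b c u v \<longleftrightarrow> (cmod l0 \<le> a \<and> cmod l1 \<le> a \<and> cmod l2 \<le> a \<and>
      cmod l0 * cmod l1 \<le> a*b \<and> cmod l0 * cmod l2 \<le> a*b \<and> cmod l1 * cmod l2 \<le> a*b)"
proof -
  have RF: "RZ a b c u v \<longleftrightarrow> FF a b c u v" using RZ_imp_FF[OF ab bc] FF_imp_RZ[OF ab bc] by blast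
  have allreal: "FF a b c u v \<longleftrightarrow> (cmod l0 \<le> a \<and> cmod l1 \<le> a \<and> cmod l2 \<le> a \<and>
      cmod l0 * cmod l1 \<le> a*b \<and> cmod l0 * cmod l2 \<le> a*b \<and> cmod l1 * cmod l2 \<le> a*b)"
    if "Im l0 = 0" "Im l1 = 0" "Im l2 = 0"
    by (rule real_core[OF ab bc that e1 e2 e3])
  have "FF a b c u v \<longleftrightarrow> (cmod l0 \<le> a \<and> cmod l1 \<le> a \<and> cmod l2 \<le> a \<and>
      cmod l0 * cmod l1 \<le> a*b \<and> cmod l0 * cmod l2 \<le> a*b \<and> cmod l1 * cmod l2 \<le> a*b)"
  proof (cases "Im l0 = 0 \<and> Im l1 = 0 \<and> Im l2 = 0")
    case True thus ?thesis using allreal by blast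
  next
    case False
    from N False consider (c2) "l1 = cnj l0" "Im l2 = 0" "Im l0 \<noteq> 0" | (c3) "l2 = cnj l0" "Im l1 = 0" "Im l0 \<noteq> 0"
      | (c4) "l2 = cnj l1" "Im l0 = 0" "Im l1 \<noteq> 0"
      unfolding NF_def by auto
    thus ?thesis
    proof cases
      case c2
      show ?thesis using pair_core[OF ab bc c2(3) c2(2), of u v] e1 e2 e3 unfolding c2(1) by simp
    next
      case c3
      have "FF a b c u v \<longleftrightarrow> (cmod l0 \<le> a \<and> cmod (cnj l0) \<le> a \<and> cmod l1 \<le> a \<and>
         cmod l0 * cmod (cnj l0) \<le> a*b \<and> cmod l0 * cmod l1 \<le> a*b \<and> cmod (cnj l0) * cmod l1 \<le> a*b)"
        by (rule pair_core[OF ab bc c3(3) c3(2)]) (use e1 e2 e3 in \<open>simp_all add: c3(1) ac_simps\<close>)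
      thus ?thesis unfolding c3(1) by (auto simp: ac_simps)
    next
      case c4
      have "FF a b c u v \<longleftrightarrow> (cmod l1 \<le> a \<and> cmod (cnj l1) \<le> a \<and> cmod l0 \<le> a \<and>
         cmod l1 * cmod (cnj l1) \<le> a*b \<and> cmod l1 * cmod l0 \<le> a*b \<and> cmod (cnj l1) * cmod l0 \<le> a*b)"
        by (rule pair_core[OF ab bc c4(3) c4(2)]) (use e1 e2 e3 in \<open>simp_all add: c4(1) ac_simps\<close>)
      thus ?thesis unfolding c4(1) by (auto simp: ac_simps)
    qed
  qed
  thus ?thesis using RF by simp
qed

lemma wlog3:
  fixes P :: "real \<Rightarrow> real \<Rightarrow> real \<Rightarrow> bool"
  assumes S: "\<And>a b c. a \<ge> b \<Longrightarrow> b \<ge> \<bar>c\<bar> \<Longrightarrow> P a b c"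
    and sw01: "\<And>x y z. P x y z \<Longrightarrow> P y x z"
    and sw12: "\<And>x y z. P x y z \<Longrightarrow> P x z y"
    and fl: "\<And>x y z. P x y z \<Longrightarrow> P (-x) (-y) z"
  shows "P x y z"
proof -
  have f02: "P (-x) y (-z)" if "P x y z" for x y z using sw12[OF fl[OF sw12[OF that]]] by simp
  have f12: "P x (-y) (-z)" if "P x y z" for x y z using sw01[OF f02[OF sw01[OF that]]] by simp
  have A: "P x y z" if h: "\<bar>x\<bar> \<ge> \<bar>y\<bar>" "\<bar>y\<bar> \<ge> \<bar>z\<bar>" for x y z
  proof -
    consider "x \<ge> 0" "y \<ge> 0" | "x < 0" "y < 0" | "x < 0" "y \<ge> 0" | "x \<ge> 0" "y < 0" by linarith
    thus ?thesis
    proof cases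
      case 1 
      have "x \<ge> y" "y \<ge> \<bar>z\<bar>" using h 1 by auto
      thus ?thesis by (rule S)
    next
      case 2
      have "-x \<ge> -y" "-y \<ge> \<bar>z\<bar>" using h 2 by auto
      hence "P (-x) (-y) z" by (rule S)
      from fl[OF this] show ?thesis by simp
    next
      case 3
      have "-x \<ge> y" "y \<ge> \<bar>-z\<bar>" using h 3 by auto
      hence "P (-x) y (-z)" by (rule S)
      from f02[OF this] show ?thesis by simp
    next
      case 4
      have "x \<ge> -y" "-y \<ge> \<bar>-z\<bar>" using h 4 by auto
      hence "P x (-y) (-z)" by (rule S)
      from f12[OF this] show ?thesis by simp
    qed
  qed
  consider "\<bar>x\<bar> \<ge> \<bar>y\<bar>" "\<bar>y\<bar> \<ge> \<bar>z\<bar>" | "\<bar>x\<bar> \<ge> \<bar>z\<bar>" "\<bar>z\<bar> \<ge> \<bar>y\<bar>" | "\<bar>y\<bar> \<ge> \<bar>x\<bar>" "\<bar>x\<bar> \<ge> \<bar>z\<bar>"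
    | "\<bar>y\<bar> \<ge> \<bar>z\<bar>" "\<bar>z\<bar> \<ge> \<bar>x\<bar>" | "\<bar>z\<bar> \<ge> \<bar>x\<bar>" "\<bar>x\<bar> \<ge> \<bar>y\<bar>" | "\<bar>z\<bar> \<ge> \<bar>y\<bar>" "\<bar>y\<bar> \<ge> \<bar>x\<bar>"
    by linarith
  thus ?thesis
  proof cases
    case 1 thus ?thesis using A by blast
  next
    case 2 thus ?thesis using sw12[OF A[where x=x and y=z and z=y]] by blast
  next
    case 3 thus ?thesis using sw01[OF A[where x=y and y=x and z=z]] by blast
  next
    case 4 thus ?thesis using sw01[OF sw12[OF A[where x=y and y=z and z=x]]] by blast
  next
    case 5 thus ?thesis using sw12[OF sw01[OF A[where x=z and y=x and z=y]]] by blast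
  next
    case 6 thus ?thesis using sw12[OF sw01[OF sw12[OF A[where x=z and y=y and z=x]]]] by blast
  qed
qed

lemma RZ_sw01: "RZ x y z u v \<Longrightarrow> RZ y x z u v"
  unfolding RZ_def
proof (elim exE conjE)
  fix q0 q1 q2 assume "tet q0 q1 q2" "u = x*q0+y*q1+z*q2" "v = y*z*q0 + x*z*q1 + x*y*q2"
  thus "\<exists>q0 q1 q2. tet q0 q1 q2 \<and> u = y*q0+x*q1+z*q2 \<and> v = x*z*q0 + y*z*q1 + y*x*q2"
    by (intro exI[of _ q1] exI[of _ q0] exI[of _ q2]) (auto simp: tet_def algebra_simps)
qed

lemma RZ_sw12: "RZ x y z u v \<Longrightarrow> RZ x z y u v"
  unfolding RZ_def
proof (elim exE conjE)
  fix q0 q1 q2 assume "tet q0 q1 q2" "u = x*q0+y*q1+z*q2" "v = y*z*q0 + x*z*q1 + x*y*q2"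
  thus "\<exists>q0 q1 q2. tet q0 q1 q2 \<and> u = x*q0+z*q1+y*q2 \<and> v = z*y*q0 + x*y*q1 + x*z*q2"
    by (intro exI[of _ q0] exI[of _ q2] exI[of _ q1]) (auto simp: tet_def algebra_simps)
qed

lemma RZ_fl: "RZ x y z u v \<Longrightarrow> RZ (-x) (-y) z u v"
  unfolding RZ_def
proof (elim exE conjE)
  fix q0 q1 q2 assume "tet q0 q1 q2" "u = x*q0+y*q1+z*q2" "v = y*z*q0 + x*z*q1 + x*y*q2"
  thus "\<exists>q0 q1 q2. tet q0 q1 q2 \<and> u = (-x)*q0+(-y)*q1+z*q2 \<and> v = (-y)*z*q0 + (-x)*z*q1 + (-x)*(-y)*q2"
    by (intro exI[of _ "-q0"] exI[of _ "-q1"] exI[of _ q2]) (auto simp: tet_def algebra_simps)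
qed

lemma core_general:
  fixes u v :: real and l0 l1 l2 :: complex
  assumes N: "NF l0 l1 l2"
    and e1: "l0+l1+l2 = of_real u" and e2: "l0*l1+l0*l2+l1*l2 = of_real v"
  shows "l0*l1*l2 = of_real (x*y*z) \<longrightarrow> (RZ x y z u v \<longleftrightarrow>
     (mx3 (cmod l0) (cmod l1) (cmod l2) \<le> mx3 (\<bar>x\<bar>) (\<bar>y\<bar>) (\<bar>z\<bar>) \<and>
      mx3 (cmod l0 * cmod l1) (cmod l0 * cmod l2) (cmod l1 * cmod l2) \<le> mx3 (\<bar>x\<bar>*\<bar>y\<bar>) (\<bar>x\<bar>*\<bar>z\<bar>) (\<bar>y\<bar>*\<bar>z\<bar>)))"
proof (rule wlog3[where P = "\<lambda>x y z. l0*l1*l2 = of_real (x*y*z) \<longrightarrow> (RZ x y z u v \<longleftrightarrow>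
     (mx3 (cmod l0) (cmod l1) (cmod l2) \<le> mx3 (\<bar>x\<bar>) (\<bar>y\<bar>) (\<bar>z\<bar>) \<and>
      mx3 (cmod l0 * cmod l1) (cmod l0 * cmod l2) (cmod l1 * cmod l2) \<le> mx3 (\<bar>x\<bar>*\<bar>y\<bar>) (\<bar>x\<bar>*\<bar>z\<bar>) (\<bar>y\<bar>*\<bar>z\<bar>)))"])
  fix a b c :: real assume ab: "a \<ge> b" and bc: "b \<ge> \<bar>c\<bar>"
  have an: "a \<ge> 0" "b \<ge> 0" using ab bc by auto
  have m1: "mx3 (\<bar>a\<bar>) (\<bar>b\<bar>) (\<bar>c\<bar>) = a" using ab bc an unfolding mx3_def by simp
  have "mx3 (\<bar>a\<bar>*\<bar>b\<bar>) (\<bar>a\<bar>*\<bar>c\<bar>) (\<bar>b\<bar>*\<bar>c\<bar>) = \<bar>a\<bar>*\<bar>b\<bar>"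
    by (rule top2_max) (use ab bc an in auto)
  hence m2: "mx3 (\<bar>a\<bar>*\<bar>b\<bar>) (\<bar>a\<bar>*\<bar>c\<bar>) (\<bar>b\<bar>*\<bar>c\<bar>) = a*b" using an by simp
  show "l0*l1*l2 = of_real (a*b*c) \<longrightarrow> (RZ a b c u v \<longleftrightarrow>
     (mx3 (cmod l0) (cmod l1) (cmod l2) \<le> mx3 (\<bar>a\<bar>) (\<bar>b\<bar>) (\<bar>c\<bar>) \<and>
      mx3 (cmod l0 * cmod l1) (cmod l0 * cmod l2) (cmod l1 * cmod l2) \<le> mx3 (\<bar>a\<bar>*\<bar>b\<bar>) (\<bar>a\<bar>*\<bar>c\<bar>) (\<bar>b\<bar>*\<bar>c\<bar>)))"
    unfolding m1 m2 mx3_le_iff using core_sorted[OF ab bc N e1 e2] by blast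
next
  fix x y z :: real
  assume h: "l0*l1*l2 = of_real (x*y*z) \<longrightarrow> (RZ x y z u v \<longleftrightarrow>
     (mx3 (cmod l0) (cmod l1) (cmod l2) \<le> mx3 (\<bar>x\<bar>) (\<bar>y\<bar>) (\<bar>z\<bar>) \<and>
      mx3 (cmod l0 * cmod l1) (cmod l0 * cmod l2) (cmod l1 * cmod l2) \<le> mx3 (\<bar>x\<bar>*\<bar>y\<bar>) (\<bar>x\<bar>*\<bar>z\<bar>) (\<bar>y\<bar>*\<bar>z\<bar>)))"
  have R: "RZ y x z u v \<longleftrightarrow> RZ x y z u v" using RZ_sw01[of x y z u v] RZ_sw01[of y x z u v] by blast
  show "l0*l1*l2 = of_real (y*x*z) \<longrightarrow> (RZ y x z u v \<longleftrightarrow>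
     (mx3 (cmod l0) (cmod l1) (cmod l2) \<le> mx3 (\<bar>y\<bar>) (\<bar>x\<bar>) (\<bar>z\<bar>) \<and>
      mx3 (cmod l0 * cmod l1) (cmod l0 * cmod l2) (cmod l1 * cmod l2) \<le> mx3 (\<bar>y\<bar>*\<bar>x\<bar>) (\<bar>y\<bar>*\<bar>z\<bar>) (\<bar>x\<bar>*\<bar>z\<bar>)))"
    unfolding R using h by (simp add: mx3_def ac_simps)
next
  fix x y z :: real
  assume h: "l0*l1*l2 = of_real (x*y*z) \<longrightarrow> (RZ x y z u v \<longleftrightarrow>
     (mx3 (cmod l0) (cmod l1) (cmod l2) \<le> mx3 (\<bar>x\<bar>) (\<bar>y\<bar>) (\<bar>z\<bar>) \<and>
      mx3 (cmod l0 * cmod l1) (cmod l0 * cmod l2) (cmod l1 * cmod l2) \<le> mx3 (\<bar>x\<bar>*\<bar>y\<bar>) (\<bar>x\<bar>*\<bar>z\<bar>) (\<bar>y\<bar>*\<bar>z\<bar>)))"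
  have R: "RZ x z y u v \<longleftrightarrow> RZ x y z u v" using RZ_sw12[of x y z u v] RZ_sw12[of x z y u v] by blast
  show "l0*l1*l2 = of_real (x*z*y) \<longrightarrow> (RZ x z y u v \<longleftrightarrow>
     (mx3 (cmod l0) (cmod l1) (cmod l2) \<le> mx3 (\<bar>x\<bar>) (\<bar>z\<bar>) (\<bar>y\<bar>) \<and>
      mx3 (cmod l0 * cmod l1) (cmod l0 * cmod l2) (cmod l1 * cmod l2) \<le> mx3 (\<bar>x\<bar>*\<bar>z\<bar>) (\<bar>x\<bar>*\<bar>y\<bar>) (\<bar>z\<bar>*\<bar>y\<bar>)))"
    unfolding R using h by (simp add: mx3_def ac_simps)
next
  fix x y z :: real
  assume h: "l0*l1*l2 = of_real (x*y*z) \<longrightarrow> (RZ x y z u v \<longleftrightarrow>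
     (mx3 (cmod l0) (cmod l1) (cmod l2) \<le> mx3 (\<bar>x\<bar>) (\<bar>y\<bar>) (\<bar>z\<bar>) \<and>
      mx3 (cmod l0 * cmod l1) (cmod l0 * cmod l2) (cmod l1 * cmod l2) \<le> mx3 (\<bar>x\<bar>*\<bar>y\<bar>) (\<bar>x\<bar>*\<bar>z\<bar>) (\<bar>y\<bar>*\<bar>z\<bar>)))"
  have R: "RZ (-x) (-y) z u v \<longleftrightarrow> RZ x y z u v" using RZ_fl[of x y z u v] RZ_fl[of "-x" "-y" z u v] by auto
  show "l0*l1*l2 = of_real ((-x)*(-y)*z) \<longrightarrow> (RZ (-x) (-y) z u v \<longleftrightarrow>
     (mx3 (cmod l0) (cmod l1) (cmod l2) \<le> mx3 (\<bar>-x\<bar>) (\<bar>-y\<bar>) (\<bar>z\<bar>) \<and>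
      mx3 (cmod l0 * cmod l1) (cmod l0 * cmod l2) (cmod l1 * cmod l2) \<le> mx3 (\<bar>-x\<bar>*\<bar>-y\<bar>) (\<bar>-x\<bar>*\<bar>z\<bar>) (\<bar>-y\<bar>*\<bar>z\<bar>)))"
    unfolding R using h by simp
qed

lemma sum3: "(\<Sum>k\<in>{0..<3::nat}. f k) = f 0 + f 1 + f 2"
  by (simp add: numeral_3_eq_3 numeral_2_eq_2)

lemma mult3:
  assumes "A \<in> carrier_mat 3 3" "B \<in> carrier_mat 3 3" "i < 3" "j < 3"
  shows "(A*B)$$(i,j) = A$$(i,0)*B$$(0,j) + A$$(i,1)*B$$(1,j) + A$$(i,2)*B$$(2,j)"
  using assms by (simp add: scalar_prod_def sum3)

lemma SO3_entries:
  assumes R: "R \<in> SO3"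
  shows "R$$(0,0)^2 + R$$(1,0)^2 + R$$(2,0)^2 = 1" "R$$(0,1)^2 + R$$(1,1)^2 + R$$(2,1)^2 = 1"
    "R$$(0,2)^2 + R$$(1,2)^2 + R$$(2,2)^2 = 1"
    "R$$(0,0)*R$$(0,1) + R$$(1,0)*R$$(1,1) + R$$(2,0)*R$$(2,1) = 0"
    "R$$(0,0)*R$$(0,2) + R$$(1,0)*R$$(1,2) + R$$(2,0)*R$$(2,2) = 0"
    "R$$(0,1)*R$$(0,2) + R$$(1,1)*R$$(1,2) + R$$(2,1)*R$$(2,2) = 0"
    "R$$(0,0)*R$$(1,1)*R$$(2,2) - R$$(0,0)*R$$(1,2)*R$$(2,1) - R$$(0,1)*R$$(1,0)*R$$(2,2) + R$$(0,1)*R$$(1,2)*R$$(2,0)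
      + R$$(0,2)*R$$(1,0)*R$$(2,1) - R$$(0,2)*R$$(1,1)*R$$(2,0) = 1"
proof -
  have C: "R \<in> carrier_mat 3 3" and O: "transpose_mat R * R = 1\<^sub>m 3" and D: "det R = 1" using R unfolding SO3_def by auto
  have CT: "transpose_mat R \<in> carrier_mat 3 3" using C by simp
  have e: "(transpose_mat R * R)$$(i,j) = R$$(0,i)*R$$(0,j) + R$$(1,i)*R$$(1,j) + R$$(2,i)*R$$(2,j)" if "i < 3" "j < 3" for i j
    using mult3[OF CT C that] that C by simp
  have o: "(transpose_mat R * R)$$(i,j) = (if i = j then 1 else 0)" if "i < 3" "j < 3" for i j
    unfolding O using that by simp
  show "R$$(0,0)^2 + R$$(1,0)^2 + R$$(2,0)^2 = 1" using e[of 0 0] o[of 0 0] by (simp add: power2_eq_square)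
  show "R$$(0,1)^2 + R$$(1,1)^2 + R$$(2,1)^2 = 1" using e[of 1 1] o[of 1 1] by (simp add: power2_eq_square)
  show "R$$(0,2)^2 + R$$(1,2)^2 + R$$(2,2)^2 = 1" using e[of 2 2] o[of 2 2] by (simp add: power2_eq_square)
  show "R$$(0,0)*R$$(0,1) + R$$(1,0)*R$$(1,1) + R$$(2,0)*R$$(2,1) = 0" using e[of 0 1] o[of 0 1] by simp
  show "R$$(0,0)*R$$(0,2) + R$$(1,0)*R$$(1,2) + R$$(2,0)*R$$(2,2) = 0" using e[of 0 2] o[of 0 2] by simp
  show "R$$(0,1)*R$$(0,2) + R$$(1,1)*R$$(1,2) + R$$(2,1)*R$$(2,2) = 0" using e[of 1 2] o[of 1 2] by simp
  show "R$$(0,0)*R$$(1,1)*R$$(2,2) - R$$(0,0)*R$$(1,2)*R$$(2,1) - R$$(0,1)*R$$(1,0)*R$$(2,2) + R$$(0,1)*R$$(1,2)*R$$(2,0)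
      + R$$(0,2)*R$$(1,0)*R$$(2,1) - R$$(0,2)*R$$(1,1)*R$$(2,0) = 1" using D det3[OF C] by simp
qed

lemma SO3_facts:
  assumes R: "R \<in> SO3"
  shows "tet (R$$(0,0)) (R$$(1,1)) (R$$(2,2))" "R$$(2,2) = R$$(0,0)*R$$(1,1) - R$$(0,1)*R$$(1,0)"
    "R$$(1,1) = R$$(0,0)*R$$(2,2) - R$$(0,2)*R$$(2,0)" "R$$(0,0) = R$$(1,1)*R$$(2,2) - R$$(1,2)*R$$(2,1)"
proof -
  note E = SO3_entries[OF R]
  define a where "a = R$$(0,0)" define b where "b = R$$(0,1)" define c where "c = R$$(0,2)"
  define d where "d = R$$(1,0)" define e where "e = R$$(1,1)" define f where "f = R$$(1,2)"
  define g where "g = R$$(2,0)" define h where "h = R$$(2,1)" define k where "k = R$$(2,2)"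
  note E' = E[folded a_def b_def c_def d_def e_def f_def g_def h_def k_def]
  note F = rot_facts[OF E']
  have t1: "1 + a + e + k \<ge> 0" by (rule F(4))
  have t2: "1 + a + (-e) + (-k) \<ge> 0"
    by (rule rot_facts(4)[where a=a and b="-b" and c="-c" and d=d and e="-e" and f="-f" and g=g and h="-h" and k="-k"])
       (use E' in \<open>simp_all add: algebra_simps\<close>)
  have t3: "1 + (-a) + e + (-k) \<ge> 0"
    by (rule rot_facts(4)[where a="-a" and b=b and c="-c" and d="-d" and e=e and f="-f" and g="-g" and h=h and k="-k"])
       (use E' in \<open>simp_all add: algebra_simps\<close>)
  have t4: "1 + (-a) + (-e) + k \<ge> 0"
    by (rule rot_facts(4)[where a="-a" and b="-b" and c=c and d="-d" and e="-e" and f=f and g="-g" and h="-h" and k=k])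
       (use E' in \<open>simp_all add: algebra_simps\<close>)
  show "tet (R$$(0,0)) (R$$(1,1)) (R$$(2,2))" unfolding tet_def a_def[symmetric] e_def[symmetric] k_def[symmetric]
    using t1 t2 t3 t4 by simp
  show "R$$(2,2) = R$$(0,0)*R$$(1,1) - R$$(0,1)*R$$(1,0)" using F(1) unfolding a_def b_def d_def e_def k_def .
  show "R$$(1,1) = R$$(0,0)*R$$(2,2) - R$$(0,2)*R$$(2,0)" using F(2) unfolding a_def c_def e_def g_def k_def .
  show "R$$(0,0) = R$$(1,1)*R$$(2,2) - R$$(1,2)*R$$(2,1)" using F(3) unfolding a_def e_def f_def h_def k_def .
qed

lemma SO3_rrt: assumes "R \<in> SO3" shows "R * transpose_mat R = 1\<^sub>m 3"
proof -
  have C: "R \<in> carrier_mat 3 3" and O: "transpose_mat R * R = 1\<^sub>m 3" using assms unfolding SO3_def by auto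
  show ?thesis by (rule mat_mult_left_right_inverse[OF _ C O]) (use C in simp)
qed

lemma SO3_transpose: assumes "R \<in> SO3" shows "transpose_mat R \<in> SO3"
proof -
  have C: "R \<in> carrier_mat 3 3" and D: "det R = 1" using assms unfolding SO3_def by auto
  show ?thesis unfolding SO3_def using C SO3_rrt[OF assms] det_transpose[OF C] D by simp
qed

lemma SO3_one: "1\<^sub>m 3 \<in> SO3" unfolding SO3_def by simp

lemma SO3_mult: assumes R: "R \<in> SO3" and S: "S \<in> SO3" shows "R * S \<in> SO3"
proof -
  have CR: "R \<in> carrier_mat 3 3" and OR: "transpose_mat R * R = 1\<^sub>m 3" and DR: "det R = 1" using R unfolding SO3_def by auto
  have CS: "S \<in> carrier_mat 3 3" and OS: "transpose_mat S * S = 1\<^sub>m 3" and DS: "det S = 1" using S unfolding SO3_def by auto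
  have CRT: "transpose_mat R \<in> carrier_mat 3 3" and CST: "transpose_mat S \<in> carrier_mat 3 3" using CR CS by auto
  have "transpose_mat (R * S) * (R * S) = (transpose_mat S * transpose_mat R) * (R * S)"
    by (simp add: transpose_mult[OF CR CS])
  also have "\<dots> = transpose_mat S * (transpose_mat R * (R * S))"
    by (rule assoc_mult_mat[OF CST CRT, of _ 3]) (use CR CS in simp)
  also have "transpose_mat R * (R * S) = (transpose_mat R * R) * S"
    by (rule assoc_mult_mat[OF CRT CR CS, symmetric])
  also have "\<dots> = S" using OR CS by simp
  also have "transpose_mat S * S = 1\<^sub>m 3" by (rule OS)
  finally have "transpose_mat (R * S) * (R * S) = 1\<^sub>m 3" .
  moreover have "det (R * S) = 1" using det_mult[OF CR CS] DR DS by simp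
  ultimately show ?thesis unfolding SO3_def using CR CS by simp
qed

lemma entries_SO3:
  fixes F :: "nat \<Rightarrow> nat \<Rightarrow> real"
  assumes n0: "F 0 0^2 + F 1 0^2 + F 2 0^2 = 1" and n1: "F 0 1^2 + F 1 1^2 + F 2 1^2 = 1"
    and n2: "F 0 2^2 + F 1 2^2 + F 2 2^2 = 1"
    and o01: "F 0 0*F 0 1 + F 1 0*F 1 1 + F 2 0*F 2 1 = 0"
    and o02: "F 0 0*F 0 2 + F 1 0*F 1 2 + F 2 0*F 2 2 = 0"
    and o12: "F 0 1*F 0 2 + F 1 1*F 1 2 + F 2 1*F 2 2 = 0"
    and d: "F 0 0*F 1 1*F 2 2 - F 0 0*F 1 2*F 2 1 - F 0 1*F 1 0*F 2 2 + F 0 1*F 1 2*F 2 0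
      + F 0 2*F 1 0*F 2 1 - F 0 2*F 1 1*F 2 0 = 1"
  shows "Matrix.mat 3 3 (\<lambda>(i,j). F i j) \<in> SO3"
proof -
  let ?R = "Matrix.mat 3 3 (\<lambda>(i,j). F i j)"
  have C: "?R \<in> carrier_mat 3 3" by simp
  have CT: "transpose_mat ?R \<in> carrier_mat 3 3" by simp
  have "transpose_mat ?R * ?R = 1\<^sub>m 3"
  proof (rule eq_matI)
    fix i j assume "i < dim_row (1\<^sub>m 3 :: real mat)" "j < dim_col (1\<^sub>m 3 :: real mat)"
    hence ij: "i < 3" "j < 3" by auto
    have e: "(transpose_mat ?R * ?R)$$(i,j) = F 0 i * F 0 j + F 1 i * F 1 j + F 2 i * F 2 j"
      using mult3[OF CT C ij] ij by simp
    have "i = 0 \<or> i = 1 \<or> i = 2" "j = 0 \<or> j = 1 \<or> j = 2" using ij by auto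
    thus "(transpose_mat ?R * ?R)$$(i,j) = 1\<^sub>m 3 $$ (i,j)"
      unfolding e using ij n0 n1 n2 o01 o02 o12 by (auto simp: power2_eq_square algebra_simps)
  qed auto
  moreover have "det ?R = 1" using det3[OF C] d by simp
  ultimately show ?thesis unfolding SO3_def by simp
qed

definition qe :: "real \<Rightarrow> real \<Rightarrow> real \<Rightarrow> real \<Rightarrow> nat \<Rightarrow> nat \<Rightarrow> real" where
  "qe p q r s i j = (if i = 0 then (if j = 0 then p^2+q^2-r^2-s^2 else if j = 1 then 2*(q*r - p*s) else 2*(q*s + p*r))
     else if i = 1 then (if j = 0 then 2*(q*r + p*s) else if j = 1 then p^2-q^2+r^2-s^2 else 2*(r*s - p*q))
     else (if j = 0 then 2*(q*s - p*r) else if j = 1 then 2*(r*s + p*q) else p^2-q^2-r^2+s^2))"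

lemma quat_SO3:
  fixes p q r s :: real
  assumes n: "p^2+q^2+r^2+s^2 = 1"
  shows "Matrix.mat 3 3 (\<lambda>(i,j). qe p q r s i j) \<in> SO3"
proof (rule entries_SO3)
  let ?N = "p^2+q^2+r^2+s^2"
  show "qe p q r s 0 0^2 + qe p q r s 1 0^2 + qe p q r s 2 0^2 = 1"
  proof -
    have "qe p q r s 0 0^2 + qe p q r s 1 0^2 + qe p q r s 2 0^2 = ?N^2" unfolding qe_def by (simp add: power2_eq_square algebra_simps)
    thus ?thesis using n by simp
  qed
  show "qe p q r s 0 1^2 + qe p q r s 1 1^2 + qe p q r s 2 1^2 = 1"
  proof -
    have "qe p q r s 0 1^2 + qe p q r s 1 1^2 + qe p q r s 2 1^2 = ?N^2" unfolding qe_def by (simp add: power2_eq_square algebra_simps)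
    thus ?thesis using n by simp
  qed
  show "qe p q r s 0 2^2 + qe p q r s 1 2^2 + qe p q r s 2 2^2 = 1"
  proof -
    have "qe p q r s 0 2^2 + qe p q r s 1 2^2 + qe p q r s 2 2^2 = ?N^2" unfolding qe_def by (simp add: power2_eq_square algebra_simps)
    thus ?thesis using n by simp
  qed
  show "qe p q r s 0 0*qe p q r s 0 1 + qe p q r s 1 0*qe p q r s 1 1 + qe p q r s 2 0*qe p q r s 2 1 = 0"
    unfolding qe_def by (simp add: power2_eq_square algebra_simps)
  show "qe p q r s 0 0*qe p q r s 0 2 + qe p q r s 1 0*qe p q r s 1 2 + qe p q r s 2 0*qe p q r s 2 2 = 0"
    unfolding qe_def by (simp add: power2_eq_square algebra_simps)
  show "qe p q r s 0 1*qe p q r s 0 2 + qe p q r s 1 1*qe p q r s 1 2 + qe p q r s 2 1*qe p q r s 2 2 = 0"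
    unfolding qe_def by (simp add: power2_eq_square algebra_simps)
  show "qe p q r s 0 0*qe p q r s 1 1*qe p q r s 2 2 - qe p q r s 0 0*qe p q r s 1 2*qe p q r s 2 1
      - qe p q r s 0 1*qe p q r s 1 0*qe p q r s 2 2 + qe p q r s 0 1*qe p q r s 1 2*qe p q r s 2 0
      + qe p q r s 0 2*qe p q r s 1 0*qe p q r s 2 1 - qe p q r s 0 2*qe p q r s 1 1*qe p q r s 2 0 = 1"
  proof -
    have "qe p q r s 0 0*qe p q r s 1 1*qe p q r s 2 2 - qe p q r s 0 0*qe p q r s 1 2*qe p q r s 2 1
      - qe p q r s 0 1*qe p q r s 1 0*qe p q r s 2 2 + qe p q r s 0 1*qe p q r s 1 2*qe p q r s 2 0
      + qe p q r s 0 2*qe p q r s 1 0*qe p q r s 2 1 - qe p q r s 0 2*qe p q r s 1 1*qe p q r s 2 0 = ?N^3"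
      unfolding qe_def by (simp add: power2_eq_square power3_eq_cube algebra_simps)
    thus ?thesis using n by simp
  qed
qed

lemma tet_rot:
  assumes t: "tet q0 q1 q2"
  shows "\<exists>R\<in>SO3. R$$(0,0) = q0 \<and> R$$(1,1) = q1 \<and> R$$(2,2) = q2"
proof -
  define A where "A = (1+q0+q1+q2)/4"
  define B where "B = (1+q0-q1-q2)/4"
  define C where "C = (1-q0+q1-q2)/4"
  define D where "D = (1-q0-q1+q2)/4"
  have nn: "A \<ge> 0" "B \<ge> 0" "C \<ge> 0" "D \<ge> 0" using t unfolding tet_def A_def B_def C_def D_def by auto
  define p where "p = sqrt A"
  define q where "q = sqrt B"
  define r where "r = sqrt C"
  define s where "s = sqrt D"
  have sq: "p^2 = A" "q^2 = B" "r^2 = C" "s^2 = D" unfolding p_def q_def r_def s_def using nn by simp_all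
  have n: "p^2+q^2+r^2+s^2 = 1" unfolding sq A_def B_def C_def D_def by (simp add: field_simps)
  let ?R = "Matrix.mat 3 3 (\<lambda>(i,j). qe p q r s i j)"
  have "?R \<in> SO3" by (rule quat_SO3[OF n])
  moreover have "?R$$(0,0) = q0" "?R$$(1,1) = q1" "?R$$(2,2) = q2"
    by (simp_all add: qe_def sq A_def B_def C_def D_def field_simps)
  ultimately show ?thesis by blast
qed

definition tr3 :: "real mat \<Rightarrow> real" where "tr3 X = X$$(0,0) + X$$(1,1) + X$$(2,2)"
definition m23 :: "real mat \<Rightarrow> real" where
  "m23 X = X$$(0,0)*X$$(1,1) - X$$(0,1)*X$$(1,0) + X$$(0,0)*X$$(2,2) - X$$(0,2)*X$$(2,0)
     + X$$(1,1)*X$$(2,2) - X$$(1,2)*X$$(2,1)"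

lemma cp_real_mat:
  assumes X: "X \<in> carrier_mat 3 3"
  shows "char_poly (map_mat complex_of_real X) = [: - of_real (det X), of_real (m23 X), - of_real (tr3 X), 1:]"
proof -
  have Xc: "map_mat complex_of_real X \<in> carrier_mat 3 3" using X by simp
  have "det (map_mat complex_of_real X) = of_real (det X)"
    unfolding det3[OF Xc] det3[OF X] using X by simp
  thus ?thesis unfolding char_poly3[OF Xc] m23_def tr3_def using X by simp
qed

lemma prod3_poly:
  fixes l :: "nat \<Rightarrow> complex"
  shows "(\<Prod>i<3. [:- l i, 1:]) = [: -(l 0*l 1*l 2), l 0*l 1+l 0*l 2+l 1*l 2, -(l 0+l 1+l 2), 1:]"
proof -
  have "(\<Prod>i<3. [:- l i, 1:]) = [:- l 0, 1:] * [:- l 1, 1:] * [:- l 2, 1:]"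
    by (simp add: numeral_3_eq_3 numeral_2_eq_2 lessThan_Suc ac_simps)
  also have "\<dots> = [: -(l 0*l 1*l 2), l 0*l 1+l 0*l 2+l 1*l 2, -(l 0+l 1+l 2), 1:]"
    by (simp add: poly_eq_poly_eq_iff[symmetric] algebra_simps)
  finally show ?thesis .
qed

lemma cp_iff:
  fixes l :: "nat \<Rightarrow> complex"
  assumes X: "X \<in> carrier_mat 3 3"
  shows "char_poly (map_mat complex_of_real X) = (\<Prod>i<3. [:- l i, 1:]) \<longleftrightarrow>
    (of_real (det X) = l 0*l 1*l 2 \<and> of_real (m23 X) = l 0*l 1+l 0*l 2+l 1*l 2 \<and> of_real (tr3 X) = l 0+l 1+l 2)"
  unfolding cp_real_mat[OF X] prod3_poly by (simp only: pCons_eq_iff neg_equal_iff_equal) simp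

lemma DR_facts:
  assumes R: "R \<in> SO3"
  shows "mat_diag 3 s * R \<in> carrier_mat 3 3"
    "det (mat_diag 3 s * R) = s 0 * s 1 * s 2"
    "tr3 (mat_diag 3 s * R) = s 0 * R$$(0,0) + s 1 * R$$(1,1) + s 2 * R$$(2,2)"
    "m23 (mat_diag 3 s * R) = s 1 * s 2 * R$$(0,0) + s 0 * s 2 * R$$(1,1) + s 0 * s 1 * R$$(2,2)"
proof -
  have C: "R \<in> carrier_mat 3 3" using R unfolding SO3_def by auto
  have E: "mat_diag 3 s * R = Matrix.mat 3 3 (\<lambda>(i,j). s i * R $$ (i,j))" by (rule mat_diag_mult_left[OF C])
  show X: "mat_diag 3 s * R \<in> carrier_mat 3 3" by (rule mult_carrier_mat[OF mat_diag_dim C])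
  note F = SO3_facts[OF R]
  note Ee = SO3_entries[OF R]
  show "det (mat_diag 3 s * R) = s 0 * s 1 * s 2"
  proof -
    have "det (mat_diag 3 s * R) = s 0 * s 1 * s 2 * (R$$(0,0)*R$$(1,1)*R$$(2,2) - R$$(0,0)*R$$(1,2)*R$$(2,1) - R$$(0,1)*R$$(1,0)*R$$(2,2) + R$$(0,1)*R$$(1,2)*R$$(2,0)
      + R$$(0,2)*R$$(1,0)*R$$(2,1) - R$$(0,2)*R$$(1,1)*R$$(2,0))"
      unfolding det3[OF X] unfolding E by (simp add: algebra_simps)
    thus ?thesis using Ee(7) by simp
  qed
  show "tr3 (mat_diag 3 s * R) = s 0 * R$$(0,0) + s 1 * R$$(1,1) + s 2 * R$$(2,2)"
    unfolding tr3_def E by simp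
  have "m23 (mat_diag 3 s * R) = s 0 * s 1 * (R$$(0,0)*R$$(1,1) - R$$(0,1)*R$$(1,0)) + s 0 * s 2 * (R$$(0,0)*R$$(2,2) - R$$(0,2)*R$$(2,0))
     + s 1 * s 2 * (R$$(1,1)*R$$(2,2) - R$$(1,2)*R$$(2,1))"
    unfolding m23_def E by (simp add: algebra_simps)
  also have "\<dots> = s 0 * s 1 * R$$(2,2) + s 0 * s 2 * R$$(1,1) + s 1 * s 2 * R$$(0,0)"
    unfolding F(2)[symmetric] F(3)[symmetric] F(4)[symmetric] ..
  finally show "m23 (mat_diag 3 s * R) = s 1 * s 2 * R$$(0,0) + s 0 * s 2 * R$$(1,1) + s 0 * s 1 * R$$(2,2)"
    by simp
qed

lemma LHS_iff:
  fixes l :: "nat \<Rightarrow> complex" and s :: "nat \<Rightarrow> real"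
  shows "(\<exists>\<Delta> O1 O2. \<Delta> \<in> carrier_mat 3 3
            \<and> char_poly (map_mat complex_of_real \<Delta>) = (\<Prod>i<3. [:- l i, 1:])
            \<and> O1 \<in> SO3 \<and> O2 \<in> SO3
            \<and> O1 * \<Delta> * O2 = mat_diag 3 s)
    \<longleftrightarrow> (\<exists>u v. of_real u = l 0 + l 1 + l 2 \<and> of_real v = l 0*l 1+l 0*l 2+l 1*l 2
            \<and> of_real (s 0 * s 1 * s 2) = l 0*l 1*l 2 \<and> RZ (s 0) (s 1) (s 2) u v)"
proof
  assume "\<exists>\<Delta> O1 O2. \<Delta> \<in> carrier_mat 3 3
            \<and> char_poly (map_mat complex_of_real \<Delta>) = (\<Prod>i<3. [:- l i, 1:])
            \<and> O1 \<in> SO3 \<and> O2 \<in> SO3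
            \<and> O1 * \<Delta> * O2 = mat_diag 3 s"
  then obtain \<Delta> O1 O2 where C: "\<Delta> \<in> carrier_mat 3 3" and cp: "char_poly (map_mat complex_of_real \<Delta>) = (\<Prod>i<3. [:- l i, 1:])"
    and S1: "O1 \<in> SO3" and S2: "O2 \<in> SO3" and H: "O1 * \<Delta> * O2 = mat_diag 3 s" by blast
  have C1: "O1 \<in> carrier_mat 3 3" and C2: "O2 \<in> carrier_mat 3 3" using S1 S2 unfolding SO3_def by auto
  have C1T: "transpose_mat O1 \<in> carrier_mat 3 3" and C2T: "transpose_mat O2 \<in> carrier_mat 3 3" using C1 C2 by auto
  define W where "W = transpose_mat O2 * transpose_mat O1"
  have WS: "W \<in> SO3" unfolding W_def by (rule SO3_mult[OF SO3_transpose[OF S2] SO3_transpose[OF S1]])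
  define X where "X = mat_diag 3 s * W"
  have CX: "X \<in> carrier_mat 3 3" unfolding X_def using DR_facts(1)[OF WS] .
  have r1: "O1 * transpose_mat O1 = 1\<^sub>m 3" using SO3_rrt[OF S1] .
  have l1: "transpose_mat O1 * O1 = 1\<^sub>m 3" using S1 unfolding SO3_def by auto
  have r2: "O2 * transpose_mat O2 = 1\<^sub>m 3" using SO3_rrt[OF S2] .
  have CD: "O1 * \<Delta> \<in> carrier_mat 3 3" using C1 C by simp
  have "X = (O1 * \<Delta> * O2) * (transpose_mat O2 * transpose_mat O1)" unfolding X_def W_def H ..
  also have "\<dots> = (O1 * \<Delta>) * (O2 * (transpose_mat O2 * transpose_mat O1))"
    by (rule assoc_mult_mat[OF CD C2, of _ 3]) (use C1T C2T in simp)
  also have a1: "O2 * (transpose_mat O2 * transpose_mat O1) = transpose_mat O1"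
  proof -
    have "O2 * (transpose_mat O2 * transpose_mat O1) = (O2 * transpose_mat O2) * transpose_mat O1"
      by (rule assoc_mult_mat[OF C2 C2T C1T, symmetric])
    also have "\<dots> = transpose_mat O1" unfolding r2 using C1T by simp
    finally show ?thesis .
  qed
  finally have XE: "X = O1 * \<Delta> * transpose_mat O1" .
  have "similar_mat X \<Delta>"
    by (rule similar_matI[where n=3 and P=O1 and Q="transpose_mat O1"]) (use CX C C1 C1T r1 l1 XE in auto)
  hence cpe: "char_poly X = char_poly \<Delta>" by (rule char_poly_similar)
  hence "[: - det X, X$$(0,0)*X$$(1,1) - X$$(0,1)*X$$(1,0) + X$$(0,0)*X$$(2,2) - X$$(0,2)*X$$(2,0)
     + X$$(1,1)*X$$(2,2) - X$$(1,2)*X$$(2,1), - (X$$(0,0) + X$$(1,1) + X$$(2,2)), 1:] =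
     [: - det \<Delta>, \<Delta>$$(0,0)*\<Delta>$$(1,1) - \<Delta>$$(0,1)*\<Delta>$$(1,0) + \<Delta>$$(0,0)*\<Delta>$$(2,2) - \<Delta>$$(0,2)*\<Delta>$$(2,0)
     + \<Delta>$$(1,1)*\<Delta>$$(2,2) - \<Delta>$$(1,2)*\<Delta>$$(2,1), - (\<Delta>$$(0,0) + \<Delta>$$(1,1) + \<Delta>$$(2,2)), 1:]"
    unfolding char_poly3[OF CX] char_poly3[OF C] .
  hence eqs: "det X = det \<Delta>" "m23 X = m23 \<Delta>" "tr3 X = tr3 \<Delta>"
    unfolding m23_def tr3_def by (simp_all only: pCons_eq_iff neg_equal_iff_equal)
  have ce: "of_real (det \<Delta>) = l 0*l 1*l 2" "of_real (m23 \<Delta>) = l 0*l 1+l 0*l 2+l 1*l 2" "of_real (tr3 \<Delta>) = l 0+l 1+l 2"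
    using cp unfolding cp_iff[OF C] by auto
  note DF = DR_facts[OF WS, of s, folded X_def]
  show "\<exists>u v. of_real u = l 0 + l 1 + l 2 \<and> of_real v = l 0*l 1+l 0*l 2+l 1*l 2
            \<and> of_real (s 0 * s 1 * s 2) = l 0*l 1*l 2 \<and> RZ (s 0) (s 1) (s 2) u v"
  proof (intro exI conjI)
    show "of_real (tr3 X) = l 0 + l 1 + l 2" using ce eqs by simp
    show "of_real (m23 X) = l 0*l 1+l 0*l 2+l 1*l 2" using ce eqs by simp
    show "of_real (s 0 * s 1 * s 2) = l 0*l 1*l 2" using ce eqs DF(2) by simp
    show "RZ (s 0) (s 1) (s 2) (tr3 X) (m23 X)" unfolding RZ_def DF(3) DF(4)
      using SO3_facts(1)[OF WS] by (intro exI[of _ "W$$(0,0)"] exI[of _ "W$$(1,1)"] exI[of _ "W$$(2,2)"]) (simp add: algebra_simps)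
  qed
next
  assume "\<exists>u v. of_real u = l 0 + l 1 + l 2 \<and> of_real v = l 0*l 1+l 0*l 2+l 1*l 2
            \<and> of_real (s 0 * s 1 * s 2) = l 0*l 1*l 2 \<and> RZ (s 0) (s 1) (s 2) u v"
  then obtain u v where e1: "of_real u = l 0 + l 1 + l 2" and e2: "of_real v = l 0*l 1+l 0*l 2+l 1*l 2"
    and e3: "of_real (s 0 * s 1 * s 2) = l 0*l 1*l 2" and R: "RZ (s 0) (s 1) (s 2) u v" by blast
  obtain q0 q1 q2 where t: "tet q0 q1 q2" and u: "u = s 0*q0+s 1*q1+s 2*q2" and v: "v = s 1*s 2*q0 + s 0*s 2*q1 + s 0*s 1*q2"
    using R unfolding RZ_def by blast
  obtain W where WS: "W \<in> SO3" and d: "W$$(0,0) = q0" "W$$(1,1) = q1" "W$$(2,2) = q2" using tet_rot[OF t] by blast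
  have CW: "W \<in> carrier_mat 3 3" using WS unfolding SO3_def by auto
  note DF = DR_facts[OF WS, of s]
  show "\<exists>\<Delta> O1 O2. \<Delta> \<in> carrier_mat 3 3
            \<and> char_poly (map_mat complex_of_real \<Delta>) = (\<Prod>i<3. [:- l i, 1:])
            \<and> O1 \<in> SO3 \<and> O2 \<in> SO3
            \<and> O1 * \<Delta> * O2 = mat_diag 3 s"
  proof (intro exI conjI)
    show "mat_diag 3 s * W \<in> carrier_mat 3 3" by (rule DF(1))
    show "char_poly (map_mat complex_of_real (mat_diag 3 s * W)) = (\<Prod>i<3. [:- l i, 1:])"
      unfolding cp_iff[OF DF(1)] DF(2-4) d using e1 e2 e3 u v by (simp add: algebra_simps)
    show "1\<^sub>m 3 \<in> SO3" by (rule SO3_one)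
    show "transpose_mat W \<in> SO3" by (rule SO3_transpose[OF WS])
    have "1\<^sub>m 3 * (mat_diag 3 s * W) * transpose_mat W = (mat_diag 3 s * W) * transpose_mat W"
      unfolding left_mult_one_mat[OF DF(1)] ..
    also have "\<dots> = mat_diag 3 s * (W * transpose_mat W)"
      by (rule assoc_mult_mat[OF mat_diag_dim CW, of _ 3]) (use CW in simp)
    also have "\<dots> = mat_diag 3 s" unfolding SO3_rrt[OF WS] by (rule right_mult_one_mat[OF mat_diag_dim])
    finally show "1\<^sub>m 3 * (mat_diag 3 s * W) * transpose_mat W = mat_diag 3 s" .
  qed
qed

lemma lemma1_aux:
  fixes l :: "nat \<Rightarrow> complex" and s :: "nat \<Rightarrow> real"
  shows "(\<exists>\<Delta> O1 O2. \<Delta> \<in> carrier_mat 3 3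
            \<and> char_poly (map_mat complex_of_real \<Delta>) = (\<Prod>i<3. [:- l i, 1:])
            \<and> O1 \<in> SO3 \<and> O2 \<in> SO3
            \<and> O1 * \<Delta> * O2 = mat_diag 3 s)
     \<longleftrightarrow>
     (image_mset cnj (mset [l 0, l 1, l 2]) = mset [l 0, l 1, l 2]
      \<and> complex_of_real (s 0 * s 1 * s 2) = l 0 * l 1 * l 2
      \<and> (\<forall>\<sigma> \<tau>. desc_reordering (\<lambda>i. \<bar>s i\<bar>) \<sigma> \<and> desc_reordering (\<lambda>i. cmod (l i)) \<tau> \<longrightarrow>
            \<bar>s (\<sigma> 0) * s (\<sigma> 1)\<bar> \<ge> cmod (l (\<tau> 0) * l (\<tau> 1))
          \<and> \<bar>s (\<sigma> 0)\<bar> \<ge> cmod (l (\<tau> 0))))"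
  unfolding LHS_iff weyl_stmt
proof
  assume "\<exists>u v. of_real u = l 0 + l 1 + l 2 \<and> of_real v = l 0*l 1+l 0*l 2+l 1*l 2
            \<and> of_real (s 0 * s 1 * s 2) = l 0*l 1*l 2 \<and> RZ (s 0) (s 1) (s 2) u v"
  then obtain u v where e1: "of_real u = l 0 + l 1 + l 2" and e2: "of_real v = l 0*l 1+l 0*l 2+l 1*l 2"
    and e3: "of_real (s 0 * s 1 * s 2) = l 0*l 1*l 2" and R: "RZ (s 0) (s 1) (s 2) u v" by blast
  have N: "NF (l 0) (l 1) (l 2)"
    by (rule es_real_NF) (use arg_cong[OF e1, of Im] arg_cong[OF e2, of Im] arg_cong[OF e3, of Im] in simp_all)
  note G = core_general[OF N e1[symmetric] e2[symmetric], where x="s 0" and y="s 1" and z="s 2"]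
  show "image_mset cnj (mset [l 0, l 1, l 2]) = mset [l 0, l 1, l 2] \<and> complex_of_real (s 0 * s 1 * s 2) = l 0 * l 1 * l 2 \<and>
    mx3 (cmod (l 0)) (cmod (l 1)) (cmod (l 2)) \<le> mx3 (\<bar>s 0\<bar>) (\<bar>s 1\<bar>) (\<bar>s 2\<bar>) \<and>
    mx3 (cmod (l 0) * cmod (l 1)) (cmod (l 0) * cmod (l 2)) (cmod (l 1) * cmod (l 2)) \<le> mx3 (\<bar>s 0\<bar> * \<bar>s 1\<bar>) (\<bar>s 0\<bar> * \<bar>s 2\<bar>) (\<bar>s 1\<bar> * \<bar>s 2\<bar>)"
    using NF_imp_mset[OF N] e3 G R by auto
next
  assume h: "image_mset cnj (mset [l 0, l 1, l 2]) = mset [l 0, l 1, l 2] \<and> complex_of_real (s 0 * s 1 * s 2) = l 0 * l 1 * l 2 \<and>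
    mx3 (cmod (l 0)) (cmod (l 1)) (cmod (l 2)) \<le> mx3 (\<bar>s 0\<bar>) (\<bar>s 1\<bar>) (\<bar>s 2\<bar>) \<and>
    mx3 (cmod (l 0) * cmod (l 1)) (cmod (l 0) * cmod (l 2)) (cmod (l 1) * cmod (l 2)) \<le> mx3 (\<bar>s 0\<bar> * \<bar>s 1\<bar>) (\<bar>s 0\<bar> * \<bar>s 2\<bar>) (\<bar>s 1\<bar> * \<bar>s 2\<bar>)"
  have I: "Im (l 0+l 1+l 2) = 0 \<and> Im (l 0*l 1+l 0*l 2+l 1*l 2) = 0 \<and> Im (l 0*l 1*l 2) = 0"
    using mset_imp_es_real h by blast
  hence N: "NF (l 0) (l 1) (l 2)" using es_real_NF by blast
  define u where "u = Re (l 0+l 1+l 2)"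
  define v where "v = Re (l 0*l 1+l 0*l 2+l 1*l 2)"
  have e1: "l 0+l 1+l 2 = of_real u" unfolding u_def using I by (simp add: complex_eq_iff)
  have e2: "l 0*l 1+l 0*l 2+l 1*l 2 = of_real v" unfolding v_def using I by (simp add: complex_eq_iff)
  note G = core_general[OF N e1 e2, where x="s 0" and y="s 1" and z="s 2"]
  have "RZ (s 0) (s 1) (s 2) u v" using G h by auto
  thus "\<exists>u v. of_real u = l 0 + l 1 + l 2 \<and> of_real v = l 0*l 1+l 0*l 2+l 1*l 2
            \<and> of_real (s 0 * s 1 * s 2) = l 0*l 1*l 2 \<and> RZ (s 0) (s 1) (s 2) u v"
    using e1 e2 h by auto
qed

theorem lemma1:
  fixes l :: "nat \<Rightarrow> complex" and s :: "nat \<Rightarrow> real"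
  shows "(\<exists>\<Delta> O1 O2. \<Delta> \<in> carrier_mat 3 3
            \<and> char_poly (map_mat complex_of_real \<Delta>) = (\<Prod>i<3. [:- l i, 1:])
            \<and> O1 \<in> SO3 \<and> O2 \<in> SO3
            \<and> O1 * \<Delta> * O2 = mat_diag 3 s)
     \<longleftrightarrow>
     (image_mset cnj (mset [l 0, l 1, l 2]) = mset [l 0, l 1, l 2]
      \<and> complex_of_real (s 0 * s 1 * s 2) = l 0 * l 1 * l 2
      \<and> (\<forall>\<sigma> \<tau>. desc_reordering (\<lambda>i. \<bar>s i\<bar>) \<sigma> \<and> desc_reordering (\<lambda>i. cmod (l i)) \<tau> \<longrightarrow>
            \<bar>s (\<sigma> 0) * s (\<sigma> 1)\<bar> \<ge> cmod (l (\<tau> 0) * l (\<tau> 1))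
          \<and> \<bar>s (\<sigma> 0)\<bar> \<ge> cmod (l (\<tau> 0))))"
  by (rule lemma1_aux)


end
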